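(* Let $1\le k<n$ and let $V=\bigoplus_{i=1}^{2n-1}V_i$, $W=\bigoplus_{i=1}^{2n-1}W_i$ be graded complex vector spaces with $\dim V_i=\dim V_{2n-i}$, $W_i=0$ for $i\notin\{k,2n-k\}$, $W_k=W_{2n-k}$ one-dimensional, and satisfying the nonemptiness condition below. Then for every $(B_{i,j},\Gamma_i,\Delta_i)\in\Lambda^{\mathrm A_{2n-1}}(V,W)$: \[\Delta_kB_{k,k-j+1,k}\Gamma_k=(-1)^j\Delta_{2n-k}B_{2n-k,2n-k+j-1,2n-k}\Gamma_{2n-k},\] \[\Delta_kB_{k,k-j+1,2n-k}\Gamma_{2n-k}=(-1)^{j-1}\Delta_kB_{k,2n-k+j-1,2n-k}\Gamma_{2n-k},\] \[\Delta_{2n-k}B_{2n-k,k-j+1,k}\Gamma_k=(-1)^{j-1}\Delta_{2n-k}B_{2n-k,2n-k+j-1,k}\Gamma_k\] for $1\le j\le k$, and \[\Delta_{2n-k}B_{2n-k,2n-k-j+1,2n-k}\Gamma_{2n-k}=(-1)^j\Delta_kB_{k,k+j-1,k}\Gamma_k\] for $1\le j\le 2n-k$ (all these being scalars, using $W_k=W_{2n-k}$).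
   Context: $B_{i,j}$ ($|i-j|=1$) is a linear map $V_j\to V_i$, $\Gamma_i:W_i\to V_i$, $\Delta_i:V_i\to W_i$. $\Lambda^{\mathrm A_{2n-1}}(V,W)$ is the set of tuples satisfying (with $B_{0,1},B_{1,0},B_{2n,2n-1},B_{2n-1,2n}$ zero): $B_{i,i+1}B_{i+1,i}-B_{i,i-1}B_{i-1,i}=\Gamma_i\Delta_i$ for $1\le i\le n-1$; $-B_{n,n-1}B_{n-1,n}-B_{n,n+1}B_{n+1,n}=\Gamma_n\Delta_n$; $B_{i,i-1}B_{i-1,i}-B_{i,i+1}B_{i+1,i}=\Gamma_i\Delta_i$ for $n+1\le i\le2n-1$. Path notation: $B_{p,q,r}$ denotes the composite $V_r\to V_p$ of the maps $B_{\cdot,\cdot}$ along the path in the line $1,\dots,2n-1$ going from $r$ monotonically to $q$ and then monotonically to $p$ (e.g. $B_{k,k-j+1,2n-k}$ goes from $2n-k$ down to $k-j+1$ and then up to $k$); a path of length zero gives the identity. Nonemptiness condition: with $v_i=\dim V_i$, put $s_1=1-v_1$, $s_i=1-v_i+v_{i-1}$ for $2\le i\le k$, $s_i=-v_i+v_{i-1}$ for $k+1\le i\le n$; then $s_i\in\{-1,0,1\}$ for all $i$ and $|\{i:s_i\ne0\}|\le k$. *)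

theory Defs
  imports "Jordan_Normal_Form.Matrix"
begin

text \<open>Finite-dimensional complex vector spaces V_i are identified with complex^(v i)
  (after choosing bases); linear maps are complex matrices of the appropriate size.\<close>

function mono_path :: "(nat \<Rightarrow> nat \<Rightarrow> complex mat) \<Rightarrow> (nat \<Rightarrow> nat) \<Rightarrow> nat \<Rightarrow> nat \<Rightarrow> complex mat" where
  "mono_path B v q r =
     (if q = r then 1\<^sub>m (v r)
      else if q < r then B q (q+1) * mono_path B v (q+1) r
      else B q (q-1) * mono_path B v (q-1) r)"
  by pat_completeness auto
termination
  by (relation "measure (\<lambda>(B,v,q,r). if q < r then r - q else q - r)") auto

text \<open>B_{p,q,r}: from r monotonically to q, then monotonically to p.\<close>
definition path3 :: "(nat \<Rightarrow> nat \<Rightarrow> complex mat) \<Rightarrow> (nat \<Rightarrow> nat) \<Rightarrow> nat \<Rightarrow> nat \<Rightarrow> nat \<Rightarrow> complex mat" where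
  "path3 B v p q r = mono_path B v p q * mono_path B v q r"

definition Bz :: "nat \<Rightarrow> (nat \<Rightarrow> nat) \<Rightarrow> (nat \<Rightarrow> nat \<Rightarrow> complex mat) \<Rightarrow> nat \<Rightarrow> nat \<Rightarrow> complex mat" where
  "Bz n v B i j = (if 1 \<le> i \<and> i \<le> 2*n-1 \<and> 1 \<le> j \<and> j \<le> 2*n-1 then B i j else 0\<^sub>m (v i) (v j))"

text \<open>Membership in Lambda^{A_{2n-1}}(V,W), dim V_i = v i, dim W_i = w i.\<close>
definition Lambda_A :: "nat \<Rightarrow> (nat \<Rightarrow> nat) \<Rightarrow> (nat \<Rightarrow> nat) \<Rightarrow> (nat \<Rightarrow> nat \<Rightarrow> complex mat)
    \<Rightarrow> (nat \<Rightarrow> complex mat) \<Rightarrow> (nat \<Rightarrow> complex mat) \<Rightarrow> bool" where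
  "Lambda_A n v w B \<Gamma> \<Delta> \<longleftrightarrow>
     (\<forall>i. 1 \<le> i \<and> i < 2*n-1 \<longrightarrow>
        B i (i+1) \<in> carrier_mat (v i) (v (i+1)) \<and> B (i+1) i \<in> carrier_mat (v (i+1)) (v i)) \<and>
     (\<forall>i. 1 \<le> i \<and> i \<le> 2*n-1 \<longrightarrow>
        \<Gamma> i \<in> carrier_mat (v i) (w i) \<and> \<Delta> i \<in> carrier_mat (w i) (v i)) \<and>
     (\<forall>i. 1 \<le> i \<and> i \<le> n-1 \<longrightarrow>
        Bz n v B i (i+1) * Bz n v B (i+1) i - Bz n v B i (i-1) * Bz n v B (i-1) i = \<Gamma> i * \<Delta> i) \<and>
     (- (Bz n v B n (n-1) * Bz n v B (n-1) n) - Bz n v B n (n+1) * Bz n v B (n+1) n = \<Gamma> n * \<Delta> n) \<and>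
     (\<forall>i. n+1 \<le> i \<and> i \<le> 2*n-1 \<longrightarrow>
        Bz n v B i (i-1) * Bz n v B (i-1) i - Bz n v B i (i+1) * Bz n v B (i+1) i = \<Gamma> i * \<Delta> i)"

definition s_seq :: "nat \<Rightarrow> (nat \<Rightarrow> nat) \<Rightarrow> nat \<Rightarrow> int" where
  "s_seq k v i =
     (if i = 1 then 1 - int (v 1)
      else if i \<le> k then 1 - int (v i) + int (v (i-1))
      else - int (v i) + int (v (i-1)))"

definition nonempty_cond :: "nat \<Rightarrow> nat \<Rightarrow> (nat \<Rightarrow> nat) \<Rightarrow> bool" where
  "nonempty_cond n k v \<longleftrightarrow>
     (\<forall>i\<in>{1..n}. s_seq k v i \<in> {-1, 0, 1}) \<and> card {i\<in>{1..n}. s_seq k v i \<noteq> 0} \<le> k"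

end

theory Submission imports Defs "HOL-Computational_Algebra.Polynomial"
begin

declare mono_path.simps[simp del]

locale blk =
  fixes vv :: "nat \<Rightarrow> nat" and K M :: nat
  assumes vvM: "\<And>i. vv i \<le> M" and Mpos: "0 < M"
begin

definition NN where "NN = K * M"

definition bm :: "(nat \<Rightarrow> nat \<Rightarrow> 'a::comm_ring_1 mat) \<Rightarrow> 'a mat" where
  "bm F = mat NN NN (\<lambda>(r,s). if r mod M < vv (r div M) \<and> s mod M < vv (s div M)
        then F (r div M) (s div M) $$ (r mod M, s mod M) else 0)"

lemma bm_carrier[simp]: "bm F \<in> carrier_mat NN NN" by (simp add: bm_def)
lemma bm_dim[simp]: "dim_row (bm F) = NN" "dim_col (bm F) = NN" by (simp_all add: bm_def)

lemma bm_index: "r < NN \<Longrightarrow> s < NN \<Longrightarrow> bm F $$ (r,s) = (if r mod M < vv (r div M) \<and> s mod M < vv (s div M)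
        then F (r div M) (s div M) $$ (r mod M, s mod M) else 0)"
  by (simp add: bm_def)

lemma div_lt: "r < NN \<Longrightarrow> r div M < K"
  by (simp add: NN_def less_mult_imp_div_less)

lemma bm_eqI:
  assumes "\<And>i j y z. i < K \<Longrightarrow> j < K \<Longrightarrow> y < vv i \<Longrightarrow> z < vv j \<Longrightarrow> F i j $$ (y,z) = G i j $$ (y,z)"
  shows "bm F = bm G"
  by (rule eq_matI) (auto simp: bm_index assms div_lt)

lemma bm_cong:
  assumes "\<And>i j. i < K \<Longrightarrow> j < K \<Longrightarrow> F i j = G i j"
  shows "bm F = bm G"
  by (rule bm_eqI) (simp add: assms)

lemma bm_zero:
  assumes "\<And>i j y z. i < K \<Longrightarrow> j < K \<Longrightarrow> y < vv i \<Longrightarrow> z < vv j \<Longrightarrow> F i j $$ (y,z) = 0"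
  shows "bm F = 0\<^sub>m NN NN"
  by (rule eq_matI) (auto simp: bm_index assms div_lt)

lemma bm_add:
  assumes F: "\<And>i j. i < K \<Longrightarrow> j < K \<Longrightarrow> F i j \<in> carrier_mat (vv i) (vv j)"
    and G: "\<And>i j. i < K \<Longrightarrow> j < K \<Longrightarrow> G i j \<in> carrier_mat (vv i) (vv j)"
  shows "bm F + bm G = bm (\<lambda>i j. F i j + G i j)"
proof (rule eq_matI)
  fix r s assume "r < dim_row (bm (\<lambda>i j. F i j + G i j))" "s < dim_col (bm (\<lambda>i j. F i j + G i j))"
  then have r: "r < NN" and s: "s < NN" by auto
  show "(bm F + bm G) $$ (r, s) = bm (\<lambda>i j. F i j + G i j) $$ (r, s)"
    using r s F[OF div_lt[OF r] div_lt[OF s]] G[OF div_lt[OF r] div_lt[OF s]]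
    by (auto simp: bm_index)
qed auto

lemma bm_minus:
  assumes F: "\<And>i j. i < K \<Longrightarrow> j < K \<Longrightarrow> F i j \<in> carrier_mat (vv i) (vv j)"
    and G: "\<And>i j. i < K \<Longrightarrow> j < K \<Longrightarrow> G i j \<in> carrier_mat (vv i) (vv j)"
  shows "bm F - bm G = bm (\<lambda>i j. F i j - G i j)"
proof (rule eq_matI)
  fix r s assume "r < dim_row (bm (\<lambda>i j. F i j - G i j))" "s < dim_col (bm (\<lambda>i j. F i j - G i j))"
  then have r: "r < NN" and s: "s < NN" by auto
  show "(bm F - bm G) $$ (r, s) = bm (\<lambda>i j. F i j - G i j) $$ (r, s)"
    using r s F[OF div_lt[OF r] div_lt[OF s]] G[OF div_lt[OF r] div_lt[OF s]]
    by (auto simp: bm_index)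
qed auto

lemma bm_mult:
  assumes F: "\<And>i j. i < K \<Longrightarrow> j < K \<Longrightarrow> F i j \<in> carrier_mat (vv i) (vv j)"
    and G: "\<And>i j. i < K \<Longrightarrow> j < K \<Longrightarrow> G i j \<in> carrier_mat (vv i) (vv j)"
    and supp: "\<And>i j y z. i < K \<Longrightarrow> j < K \<Longrightarrow> j \<noteq> \<phi> i \<Longrightarrow> y < vv i \<Longrightarrow> z < vv j \<Longrightarrow> F i j $$ (y,z) = 0"
  shows "bm F * bm G = bm (\<lambda>i l. if \<phi> i < K then F i (\<phi> i) * G (\<phi> i) l else 0\<^sub>m (vv i) (vv l))"
proof (rule eq_matI)
  fix r s assume "r < dim_row (bm (\<lambda>i l. if \<phi> i < K then F i (\<phi> i) * G (\<phi> i) l else 0\<^sub>m (vv i) (vv l)))"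
     "s < dim_col (bm (\<lambda>i l. if \<phi> i < K then F i (\<phi> i) * G (\<phi> i) l else 0\<^sub>m (vv i) (vv l)))"
  then have r: "r < NN" and s: "s < NN" by auto
  define i y l z where "i = r div M" and "y = r mod M" and "l = s div M" and "z = s mod M"
  have i: "i < K" and l: "l < K" using r s by (auto simp: i_def l_def div_lt)
  define f where "f x = bm F $$ (r,x) * bm G $$ (x,s)" for x
  have LHS: "(bm F * bm G) $$ (r,s) = (\<Sum>x<NN. f x)"
    using r s by (simp add: scalar_prod_def atLeast0LessThan f_def)
  show "(bm F * bm G) $$ (r,s) = bm (\<lambda>i l. if \<phi> i < K then F i (\<phi> i) * G (\<phi> i) l else 0\<^sub>m (vv i) (vv l)) $$ (r,s)"
  proof (cases "y < vv i \<and> z < vv l \<and> \<phi> i < K")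
    case True
    define j where "j = \<phi> i"
    have j: "j < K" using True j_def by auto
    have fz: "f x = 0" if x: "x < NN" "x \<notin> (\<lambda>w. j*M + w) ` {..<vv j}" for x
    proof -
      have xj: "x div M < K" using x div_lt by auto
      show ?thesis
      proof (cases "x mod M < vv (x div M)")
        case False
        then show ?thesis using r x by (simp add: f_def bm_index)
      next
        case True
        have "x = j*M + x mod M" if "x div M = j" using that by (metis div_mult_mod_eq)
        then have "x div M \<noteq> j" using x True by (metis image_eqI lessThan_iff)
        then have "F i (x div M) $$ (y, x mod M) = 0"
          using supp[OF i xj _ _ True] True[unfolded] \<open>y < vv i \<and> z < vv l \<and> \<phi> i < K\<close> j_def by auto
        then show ?thesis using r x by (simp add: f_def bm_index i_def y_def)
      qed
    qed
    have sub: "(\<lambda>w. j*M + w) ` {..<vv j} \<subseteq> {..<NN}"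
    proof
      fix x assume "x \<in> (\<lambda>w. j*M + w) ` {..<vv j}"
      then obtain w where w: "w < vv j" "x = j*M + w" by auto
      have "w < M" using w vvM[of j] by auto
      then have "x < (j+1)*M" using w by simp
      also have "\<dots> \<le> K * M" using j by (intro mult_right_mono) auto
      finally show "x \<in> {..<NN}" by (simp add: NN_def)
    qed
    have "(\<Sum>x<NN. f x) = (\<Sum>x\<in>(\<lambda>w. j*M + w) ` {..<vv j}. f x)"
      apply (rule sum.mono_neutral_right)
        apply simp
       apply (rule sub)
      apply (intro ballI)
      apply (rule fz)
       apply auto
      done
    also have "\<dots> = (\<Sum>w<vv j. f (j*M + w))"
      by (subst sum.reindex) (auto simp: inj_on_def)
    also have "\<dots> = (\<Sum>w<vv j. F i j $$ (y,w) * G j l $$ (w,z))"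
    proof (rule sum.cong)
      fix w assume "w \<in> {..<vv j}"
      then have w: "w < vv j" "w < M" using vvM[of j] by auto
      have dv: "(j*M + w) div M = j" "(j*M + w) mod M = w" using w Mpos by auto
      have "j*M + w \<in> {..<NN}" using sub w by auto
      then show "f (j*M + w) = F i j $$ (y,w) * G j l $$ (w,z)"
        using r s w True by (simp add: f_def bm_index dv i_def y_def l_def z_def)
    qed simp
    also have "\<dots> = (F i j * G j l) $$ (y,z)"
      using F[OF i j] G[OF j l] True
      by (simp add: scalar_prod_def atLeast0LessThan)
    finally show ?thesis using LHS r s True by (simp add: bm_index j_def i_def y_def l_def z_def)
  next
    case False
    have "f x = 0" if x: "x < NN" for x
    proof -
      have xj: "x div M < K" using x div_lt by auto
      consider "\<not> y < vv i" | "\<not> z < vv l" | "y < vv i" "z < vv l" "\<not> \<phi> i < K" using False by blast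
      then show ?thesis
      proof cases
        case 1 then show ?thesis using r x by (simp add: f_def bm_index i_def y_def)
      next
        case 2 then show ?thesis using s x by (simp add: f_def bm_index l_def z_def)
      next
        case 3
        show ?thesis
        proof (cases "x mod M < vv (x div M)")
          case False
          then show ?thesis using r x by (simp add: f_def bm_index)
        next
          case True
          have "x div M \<noteq> \<phi> i" using 3 xj by auto
          then have "F i (x div M) $$ (y, x mod M) = 0" using supp[OF i xj _ 3(1) True] by auto
          then show ?thesis using r x by (simp add: f_def bm_index i_def y_def)
        qed
      qed
    qed
    then have "(\<Sum>x<NN. f x) = 0" by simp
    moreover have "bm (\<lambda>i l. if \<phi> i < K then F i (\<phi> i) * G (\<phi> i) l else 0\<^sub>m (vv i) (vv l)) $$ (r,s) = 0"
      using False r s by (auto simp: bm_index i_def y_def l_def z_def)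
    ultimately show ?thesis using LHS by simp
  qed
qed auto

end

fun msum :: "nat \<Rightarrow> (nat \<Rightarrow> 'a::comm_ring_1 mat) \<Rightarrow> nat \<Rightarrow> 'a mat" where
  "msum N f 0 = 0\<^sub>m N N"
| "msum N f (Suc p) = msum N f p + f p"

context fixes N :: nat
begin

lemma sq_minus_c[simp]: "A \<in> carrier_mat N N \<Longrightarrow> B \<in> carrier_mat N N \<Longrightarrow> A - B \<in> carrier_mat N N"
  by (rule minus_carrier_mat)
lemma sq_mult_c[simp]: "A \<in> carrier_mat N N \<Longrightarrow> B \<in> carrier_mat N N \<Longrightarrow> A * B \<in> carrier_mat N N"
  by (rule mult_carrier_mat)
lemma sq_uminus_c[simp]: "A \<in> carrier_mat N N \<Longrightarrow> - A \<in> carrier_mat N N"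
  by (rule uminus_carrier_mat)
lemma sq_madd: "A \<in> carrier_mat N N \<Longrightarrow> B \<in> carrier_mat N N \<Longrightarrow> C \<in> carrier_mat N N \<Longrightarrow> A * (B + C) = A * B + A * C"
  by (rule mult_add_distrib_mat)
lemma sq_addm: "A \<in> carrier_mat N N \<Longrightarrow> B \<in> carrier_mat N N \<Longrightarrow> C \<in> carrier_mat N N \<Longrightarrow> (A + B) * C = A * C + B * C"
  by (rule add_mult_distrib_mat)
lemma sq_mminus: "A \<in> carrier_mat N N \<Longrightarrow> B \<in> carrier_mat N N \<Longrightarrow> C \<in> carrier_mat N N \<Longrightarrow> (A::'a::comm_ring_1 mat) * (B - C) = A * B - A * C"
  by (rule mult_minus_distrib_mat)
lemma sq_minusm: "A \<in> carrier_mat N N \<Longrightarrow> B \<in> carrier_mat N N \<Longrightarrow> C \<in> carrier_mat N N \<Longrightarrow> ((A::'a::comm_ring_1 mat) - B) * C = A * C - B * C"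
  by (rule minus_mult_distrib_mat)
lemma sq_assoc: "A \<in> carrier_mat N N \<Longrightarrow> B \<in> carrier_mat N N \<Longrightarrow> C \<in> carrier_mat N N \<Longrightarrow> A * B * C = A * (B * C)"
  by (rule assoc_mult_mat)

lemma pow_mat_Suc_left: "A \<in> carrier_mat n n \<Longrightarrow> A ^\<^sub>m Suc k = A * A ^\<^sub>m k"
proof (induction k)
  case 0 then show ?case by simp
next
  case (Suc k)
  have "A ^\<^sub>m Suc (Suc k) = A ^\<^sub>m Suc k * A" by simp
  also have "\<dots> = A * A ^\<^sub>m k * A" using Suc by simp
  also have "\<dots> = A * (A ^\<^sub>m k * A)" using Suc.prems by (rule assoc_mult_mat[of _ n n _ n _ n]) (use Suc.prems in auto)
  finally show ?case by simp
qed

lemma smult_pow_mat: fixes A :: "'a::comm_ring_1 mat" shows "A \<in> carrier_mat n n \<Longrightarrow> (c \<cdot>\<^sub>m A) ^\<^sub>m p = (c ^ p) \<cdot>\<^sub>m (A ^\<^sub>m p)"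
proof (induction p)
  case 0 then show ?case by (auto intro!: eq_matI)
next
  case (Suc p)
  have "(c \<cdot>\<^sub>m A) ^\<^sub>m Suc p = (c ^ p \<cdot>\<^sub>m A ^\<^sub>m p) * (c \<cdot>\<^sub>m A)" using Suc by simp
  also have "\<dots> = (c ^ Suc p) \<cdot>\<^sub>m (A ^\<^sub>m Suc p)"
    using Suc.prems by (intro eq_matI) (auto simp: scalar_prod_def sum_distrib_left mult_ac intro!: sum.cong)
  finally show ?case .
qed

lemma upper_pow_zero:
  fixes Z :: "'a::comm_ring_1 mat"
  assumes Z: "Z \<in> carrier_mat N N" and up: "\<And>r s. r < N \<Longrightarrow> s < N \<Longrightarrow> s \<le> r \<Longrightarrow> Z $$ (r,s) = 0"
  shows "r < N \<Longrightarrow> s < N \<Longrightarrow> s < r + p \<Longrightarrow> (Z ^\<^sub>m p) $$ (r,s) = 0"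
proof (induction p arbitrary: r s)
  case 0 then show ?case using Z by simp
next
  case (Suc p)
  have "(Z ^\<^sub>m Suc p) $$ (r,s) = (\<Sum>x\<in>{0..<N}. (Z ^\<^sub>m p) $$ (r,x) * Z $$ (x,s))"
    using Z Suc.prems by (simp add: scalar_prod_def)
  also have "\<dots> = 0"
  proof (rule sum.neutral, rule ballI)
    fix x assume x: "x \<in> {0..<N}"
    show "(Z ^\<^sub>m p) $$ (r,x) * Z $$ (x,s) = 0"
    proof (cases "x < s")
      case True
      then have "x < r + p" using Suc.prems by auto
      then show ?thesis using Suc.IH[of r x] Suc.prems x by auto
    next
      case False then show ?thesis using up[of x s] x Suc.prems by auto
    qed
  qed
  finally show ?case .
qed

lemma upper_nilpotent:
  fixes Z :: "'a::comm_ring_1 mat"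
  assumes Z: "Z \<in> carrier_mat N N" and up: "\<And>r s. r < N \<Longrightarrow> s < N \<Longrightarrow> s \<le> r \<Longrightarrow> Z $$ (r,s) = 0"
  shows "Z ^\<^sub>m N = 0\<^sub>m N N"
  by (rule eq_matI) (use upper_pow_zero[OF Z up] Z in auto)

lemma lower_pow_zero:
  fixes Z :: "'a::comm_ring_1 mat"
  assumes Z: "Z \<in> carrier_mat N N" and up: "\<And>r s. r < N \<Longrightarrow> s < N \<Longrightarrow> r \<le> s \<Longrightarrow> Z $$ (r,s) = 0"
  shows "r < N \<Longrightarrow> s < N \<Longrightarrow> r < s + p \<Longrightarrow> (Z ^\<^sub>m p) $$ (r,s) = 0"
proof (induction p arbitrary: r s)
  case 0 then show ?case using Z by simp
next
  case (Suc p)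
  have "(Z ^\<^sub>m Suc p) $$ (r,s) = (\<Sum>x\<in>{0..<N}. Z $$ (r,x) * (Z ^\<^sub>m p) $$ (x,s))"
    using Z Suc.prems by (simp add: scalar_prod_def pow_mat_Suc_left[OF Z] del: pow_mat.simps)
  also have "\<dots> = 0"
  proof (rule sum.neutral, rule ballI)
    fix x assume x: "x \<in> {0..<N}"
    show "Z $$ (r,x) * (Z ^\<^sub>m p) $$ (x,s) = 0"
    proof (cases "x < r")
      case True
      then have "x < s + p" using Suc.prems by auto
      then show ?thesis using Suc.IH[of x s] Suc.prems x by auto
    next
      case False then show ?thesis using up[of r x] x Suc.prems by auto
    qed
  qed
  finally show ?case .
qed

lemma lower_nilpotent:
  fixes Z :: "'a::comm_ring_1 mat"
  assumes Z: "Z \<in> carrier_mat N N" and up: "\<And>r s. r < N \<Longrightarrow> s < N \<Longrightarrow> r \<le> s \<Longrightarrow> Z $$ (r,s) = 0"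
  shows "Z ^\<^sub>m N = 0\<^sub>m N N"
  by (rule eq_matI) (use lower_pow_zero[OF Z up] Z in auto)


lemma msum_carrier[simp]: "(\<And>i. f i \<in> carrier_mat N N) \<Longrightarrow> msum N f p \<in> carrier_mat N N"
  by (induction p) auto

lemma msum_index: "(\<And>i. f i \<in> carrier_mat N N) \<Longrightarrow> r < N \<Longrightarrow> s < N \<Longrightarrow>
   msum N f p $$ (r,s) = (\<Sum>i<p. f i $$ (r,s))"
proof (induction p)
  case (Suc p)
  have "msum N f p \<in> carrier_mat N N" "f p \<in> carrier_mat N N" using Suc.prems by (auto intro: msum_carrier)
  then show ?case using Suc by (simp add: carrier_matD(1,2)[OF \<open>f p \<in> carrier_mat N N\<close>])
qed simp

lemma mult_msum_left: "(\<And>i. f i \<in> carrier_mat N N) \<Longrightarrow> Z \<in> carrier_mat N N \<Longrightarrow>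
   Z * msum N f p = msum N (\<lambda>i. Z * f i) p"
proof (induction p)
  case (Suc p)
  have "msum N f p \<in> carrier_mat N N" "f p \<in> carrier_mat N N" using Suc.prems by (auto intro: msum_carrier)
  then show ?case using Suc by (simp add: sq_madd)
qed simp

lemma mult_msum_right: "(\<And>i. f i \<in> carrier_mat N N) \<Longrightarrow> Z \<in> carrier_mat N N \<Longrightarrow>
   msum N f p * Z = msum N (\<lambda>i. f i * Z) p"
proof (induction p)
  case (Suc p)
  have "msum N f p \<in> carrier_mat N N" "f p \<in> carrier_mat N N" using Suc.prems by (auto intro: msum_carrier)
  then show ?case using Suc by (simp add: sq_addm)
qed simp

lemma geom_left:
  fixes Z :: "'a::comm_ring_1 mat"
  assumes Z: "Z \<in> carrier_mat N N"
  shows "(1\<^sub>m N - Z) * msum N (\<lambda>i. Z ^\<^sub>m i) p = 1\<^sub>m N - Z ^\<^sub>m p"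
proof (induction p)
  case 0 then show ?case using Z by (auto intro!: eq_matI)
next
  case (Suc p)
  have c: "msum N (\<lambda>i. Z ^\<^sub>m i) p \<in> carrier_mat N N" using Z by (auto intro: msum_carrier)
  have "(1\<^sub>m N - Z) * msum N (\<lambda>i. Z ^\<^sub>m i) (Suc p)
      = (1\<^sub>m N - Z) * msum N (\<lambda>i. Z ^\<^sub>m i) p + (1\<^sub>m N - Z) * Z ^\<^sub>m p"
    using Z c by (simp add: sq_madd)
  also have "\<dots> = 1\<^sub>m N - Z ^\<^sub>m p + (Z ^\<^sub>m p - Z ^\<^sub>m Suc p)"
    using Z by (simp add: Suc sq_minusm pow_mat_Suc_left[OF Z] del: pow_mat.simps)
  also have "\<dots> = 1\<^sub>m N - Z ^\<^sub>m Suc p"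
    using Z by (intro eq_matI) auto
  finally show ?case .
qed

lemma geom_right:
  fixes Z :: "'a::comm_ring_1 mat"
  assumes Z: "Z \<in> carrier_mat N N"
  shows "msum N (\<lambda>i. Z ^\<^sub>m i) p * (1\<^sub>m N - Z) = 1\<^sub>m N - Z ^\<^sub>m p"
proof (induction p)
  case 0 then show ?case using Z by (auto intro!: eq_matI)
next
  case (Suc p)
  have c: "msum N (\<lambda>i. Z ^\<^sub>m i) p \<in> carrier_mat N N" using Z by (auto intro: msum_carrier)
  have "msum N (\<lambda>i. Z ^\<^sub>m i) (Suc p) * (1\<^sub>m N - Z)
      = msum N (\<lambda>i. Z ^\<^sub>m i) p * (1\<^sub>m N - Z) + Z ^\<^sub>m p * (1\<^sub>m N - Z)"
    using Z c by (simp add: sq_addm)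
  also have "\<dots> = 1\<^sub>m N - Z ^\<^sub>m p + (Z ^\<^sub>m p - Z ^\<^sub>m Suc p)"
    using Z by (simp add: Suc sq_mminus)
  also have "\<dots> = 1\<^sub>m N - Z ^\<^sub>m Suc p"
    using Z by (intro eq_matI) auto
  finally show ?case .
qed

lemma inv_comm_identity:
  fixes X Xi Y Yi :: "'a::comm_ring_1 mat"
  assumes c: "X \<in> carrier_mat N N" "Xi \<in> carrier_mat N N" "Y \<in> carrier_mat N N" "Yi \<in> carrier_mat N N"
    and i: "X * Xi = 1\<^sub>m N" "Xi * X = 1\<^sub>m N" "Y * Yi = 1\<^sub>m N" "Yi * Y = 1\<^sub>m N"
  shows "Xi * Yi - Yi * Xi = Xi * Yi * (X * Y - Y * X) * (Yi * Xi)"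
proof -
  have "Xi * Yi * (X * Y - Y * X) * (Yi * Xi) = Xi * Yi * (X * Y) * (Yi * Xi) - Xi * Yi * (Y * X) * (Yi * Xi)"
    using c by (simp add: sq_mminus sq_minusm)
  also have "Xi * Yi * (X * Y) * (Yi * Xi) = Xi * Yi * X * (Y * Yi) * Xi"
    using c by (simp add: sq_assoc)
  also have "\<dots> = Xi * Yi * X * 1\<^sub>m N * Xi" by (simp only: i)
  also have "\<dots> = Xi * Yi * (X * Xi)" using c by (simp add: sq_assoc)
  also have "\<dots> = Xi * Yi" using c i by simp
  also have "Xi * Yi * (Y * X) * (Yi * Xi) = Xi * (Yi * Y) * (X * Yi * Xi)"
    using c by (simp add: sq_assoc)
  also have "\<dots> = Xi * 1\<^sub>m N * (X * Yi * Xi)" by (simp only: i)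
  also have "\<dots> = (Xi * X) * (Yi * Xi)" using c by (simp add: sq_assoc)
  also have "\<dots> = Yi * Xi" using c i by simp
  finally show ?thesis ..
qed


lemma comm_XY:
  fixes a c :: "'a::comm_ring_1 mat"
  assumes a: "a \<in> carrier_mat N N" and c: "c \<in> carrier_mat N N"
  shows "(1\<^sub>m N - c) * (1\<^sub>m N - a) - (1\<^sub>m N - a) * (1\<^sub>m N - c) = c * a - a * c"
proof -
  have da: "dim_row a = N" "dim_col a = N" and dc: "dim_row c = N" "dim_col c = N" using a c by auto
  have e1: "(1\<^sub>m N - c) * (1\<^sub>m N - a) = (1\<^sub>m N - c) - (a - c * a)"
    using a c da dc by (simp add: sq_mminus sq_minusm)
  have e2: "(1\<^sub>m N - a) * (1\<^sub>m N - c) = (1\<^sub>m N - a) - (c - a * c)"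
    using a c da dc by (simp add: sq_mminus sq_minusm)
  show ?thesis unfolding e1 e2 using a c by (intro eq_matI) (auto simp: algebra_simps)
qed

end



lemma scal_E11:
  fixes G H G2 H2 x :: complex
  assumes "G - H = -x * (G*H + G2*H2)"
  shows "(1 - x*G)*(1 + x*H) + (- x*G2)*(x*H2) = 1"
proof -
  have "(1 - x*G)*(1 + x*H) + (- x*G2)*(x*H2) = 1 + x*(H - G - x*(G*H + G2*H2))" by (simp add: algebra_simps)
  also have "H - G - x*(G*H + G2*H2) = 0" using assms by (simp add: algebra_simps)
  finally show ?thesis by simp
qed

lemma scal_E12:
  fixes G H G1 H2 x :: complex
  assumes "G - H = -x * (G1*H + G*H2)"
  shows "(1 - x*G1)*(x*H) + (- x*G)*(1 + x*H2) = 0"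
proof -
  have "(1 - x*G1)*(x*H) + (- x*G)*(1 + x*H2) = x*(H - G - x*(G1*H + G*H2))" by (simp add: algebra_simps)
  also have "H - G - x*(G1*H + G*H2) = 0" using assms by (simp add: algebra_simps)
  finally show ?thesis by simp
qed

lemma scal_E21:
  fixes G H G2 H1 x :: complex
  assumes "G - H = -x * (G*H1 + G2*H)"
  shows "(- x*G)*(1 + x*H1) + (1 - x*G2)*(x*H) = 0"
proof -
  have "(- x*G)*(1 + x*H1) + (1 - x*G2)*(x*H) = x*(H - G - x*(G*H1 + G2*H))" by (simp add: algebra_simps)
  also have "H - G - x*(G*H1 + G2*H) = 0" using assms by (simp add: algebra_simps)
  finally show ?thesis by simp
qed

lemma scal_E22:
  fixes G H G1 H1 x :: complex
  assumes "G - H = -x * (G1*H1 + G*H)"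
  shows "(- x*G1)*(x*H1) + (1 - x*G)*(1 + x*H) = 1"
proof -
  have "(- x*G1)*(x*H1) + (1 - x*G)*(1 + x*H) = 1 + x*(H - G - x*(G1*H1 + G*H))" by (simp add: algebra_simps)
  also have "H - G - x*(G1*H1 + G*H) = 0" using assms by (simp add: algebra_simps)
  finally show ?thesis by simp
qed

lemma two_by_two:
  fixes g11 g12 g21 g22 h11 h12 h21 h22 :: "complex poly"
  assumes A11: "\<And>t. poly g11 t - poly h11 t = -(t^2) * (poly g11 t * poly h11 t + poly g12 t * poly h21 t)"
    and A12: "\<And>t. poly g12 t - poly h12 t = -(t^2) * (poly g11 t * poly h12 t + poly g12 t * poly h22 t)"
    and A21: "\<And>t. poly g21 t - poly h21 t = -(t^2) * (poly g21 t * poly h11 t + poly g22 t * poly h21 t)"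
    and A22: "\<And>t. poly g22 t - poly h22 t = -(t^2) * (poly g21 t * poly h12 t + poly g22 t * poly h22 t)"
  shows "g11 = - h22 \<and> g22 = - h11 \<and> g12 = h12 \<and> g21 = h21"
proof -
  define X2 :: "complex poly" where "X2 = [:0,0,1:]"
  have pX: "poly X2 t = t^2" for t by (simp add: X2_def power2_eq_square)
  define q11 where "q11 = 1 - X2 * g11"
  define q12 where "q12 = - X2 * g12"
  define q21 where "q21 = - X2 * g21"
  define q22 where "q22 = 1 - X2 * g22"
  define p11 where "p11 = 1 + X2 * h11"
  define p12 where "p12 = X2 * h12"
  define p21 where "p21 = X2 * h21"
  define p22 where "p22 = 1 + X2 * h22"
  have E11: "q11 * p11 + q12 * p21 = 1"
  proof (rule poly_eq_poly_eq_iff[THEN iffD1], rule ext)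
    fix t
    have h: "poly g11 t - poly h11 t = -(t^2) * (poly g11 t * poly h11 t + poly g12 t * poly h21 t)" by (rule A11)
    show "poly (q11 * p11 + q12 * p21) t = poly 1 t"
      unfolding q11_def p11_def q12_def p21_def using scal_E11[OF h] by (simp add: pX)
  qed
  have E12: "q11 * p12 + q12 * p22 = 0"
  proof (rule poly_eq_poly_eq_iff[THEN iffD1], rule ext)
    fix t
    have h: "poly g12 t - poly h12 t = -(t^2) * (poly g11 t * poly h12 t + poly g12 t * poly h22 t)" by (rule A12)
    show "poly (q11 * p12 + q12 * p22) t = poly 0 t"
      unfolding q11_def p12_def q12_def p22_def using scal_E12[OF h] by (simp add: pX)
  qed
  have E21: "q21 * p11 + q22 * p21 = 0"
  proof (rule poly_eq_poly_eq_iff[THEN iffD1], rule ext)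
    fix t
    have h: "poly g21 t - poly h21 t = -(t^2) * (poly g21 t * poly h11 t + poly g22 t * poly h21 t)" by (rule A21)
    show "poly (q21 * p11 + q22 * p21) t = poly 0 t"
      unfolding q21_def p11_def q22_def p21_def using scal_E21[OF h] by (simp add: pX)
  qed
  have E22: "q21 * p12 + q22 * p22 = 1"
  proof (rule poly_eq_poly_eq_iff[THEN iffD1], rule ext)
    fix t
    have h: "poly g22 t - poly h22 t = -(t^2) * (poly g21 t * poly h12 t + poly g22 t * poly h22 t)" by (rule A22)
    show "poly (q21 * p12 + q22 * p22) t = poly 1 t"
      unfolding q21_def p12_def q22_def p22_def using scal_E22[OF h] by (simp add: pX)
  qed
  define D where "D = p11 * p22 - p12 * p21"
  have "(q11 * q22 - q12 * q21) * D = (q11 * p11 + q12 * p21) * (q21 * p12 + q22 * p22) - (q11 * p12 + q12 * p22) * (q21 * p11 + q22 * p21)"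
    unfolding D_def by (simp add: algebra_simps)
  then have "(q11 * q22 - q12 * q21) * D = 1" using E11 E12 E21 E22 by simp
  then have "D dvd 1" by (metis dvd_triv_right)
  then obtain c where c: "D = [:c:]" using is_unit_poly_iff by blast
  have "poly D 0 = 1" unfolding D_def p11_def p12_def p21_def p22_def by (simp add: pX)
  then have D1: "D = 1" using c by simp
  have "p22 * (q11 * p11 + q12 * p21) - p21 * (q11 * p12 + q12 * p22) = q11 * D" unfolding D_def by (simp add: algebra_simps)
  then have "q11 = p22 * (q11 * p11 + q12 * p21) - p21 * (q11 * p12 + q12 * p22)" using D1 by simp
  then have Q11: "q11 = p22" using E11 E12 by simp
  have "p11 * (q21 * p12 + q22 * p22) - p12 * (q21 * p11 + q22 * p21) = q22 * D" unfolding D_def by (simp add: algebra_simps)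
  then have "q22 = p11 * (q21 * p12 + q22 * p22) - p12 * (q21 * p11 + q22 * p21)" using D1 by simp
  then have Q22: "q22 = p11" using E21 E22 by simp
  have "p11 * (q11 * p12 + q12 * p22) - p12 * (q11 * p11 + q12 * p21) = q12 * D" unfolding D_def by (simp add: algebra_simps)
  then have "q12 = p11 * (q11 * p12 + q12 * p22) - p12 * (q11 * p11 + q12 * p21)" using D1 by simp
  then have Q12: "q12 = - p12" using E11 E12 by simp
  have "p22 * (q21 * p11 + q22 * p21) - p21 * (q21 * p12 + q22 * p22) = q21 * D" unfolding D_def by (simp add: algebra_simps)
  then have "q21 = p22 * (q21 * p11 + q22 * p21) - p21 * (q21 * p12 + q22 * p22)" using D1 by simp
  then have Q21: "q21 = - p21" using E21 E22 by simp
  have X2nz: "X2 \<noteq> 0" by (simp add: X2_def)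
  have "X2 * (g11 + h22) = 0" using Q11 unfolding q11_def p22_def by (simp add: algebra_simps)
  then have r1: "g11 = - h22" using X2nz by (simp add: eq_neg_iff_add_eq_0)
  have "X2 * (g22 + h11) = 0" using Q22 unfolding q22_def p11_def by (simp add: algebra_simps)
  then have r2: "g22 = - h11" using X2nz by (simp add: eq_neg_iff_add_eq_0)
  have "X2 * (g12 - h12) = 0" using Q12 unfolding q12_def p12_def by (simp add: algebra_simps)
  then have r3: "g12 = h12" using X2nz by simp
  have "X2 * (g21 - h21) = 0" using Q21 unfolding q21_def p21_def by (simp add: algebra_simps)
  then have r4: "g21 = h21" using X2nz by simp
  show ?thesis using r1 r2 r3 r4 by simp
qed


lemma sum_single:
  fixes f :: "nat \<Rightarrow> complex"
  assumes "y0 < N" "\<And>y. y < N \<Longrightarrow> y \<noteq> y0 \<Longrightarrow> f y = 0"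
  shows "(\<Sum>y<N. f y) = f y0"
proof -
  have "(\<Sum>y<N. f y) = (\<Sum>y\<in>{y0}. f y)"
    by (rule sum.mono_neutral_right) (use assms in auto)
  then show ?thesis by simp
qed

lemma dsum_single:
  fixes g :: "nat \<Rightarrow> nat \<Rightarrow> complex"
  assumes x0: "x0 < N" and y0: "y0 < N"
    and z: "\<And>x y. x < N \<Longrightarrow> y < N \<Longrightarrow> \<not> (x = x0 \<and> y = y0) \<Longrightarrow> g x y = 0"
  shows "(\<Sum>x<N. \<Sum>y<N. g x y) = g x0 y0"
proof -
  have "(\<Sum>x<N. \<Sum>y<N. g x y) = (\<Sum>y<N. g x0 y)"
  proof (rule sum_single[OF x0])
    fix x assume "x < N" "x \<noteq> x0"
    then show "(\<Sum>y<N. g x y) = 0" using z by (intro sum.neutral) auto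
  qed
  also have "\<dots> = g x0 y0"
    by (rule sum_single[OF y0]) (use z x0 in auto)
  finally show ?thesis .
qed

locale setting =
  fixes n k :: nat and v :: "nat \<Rightarrow> nat" and B :: "nat \<Rightarrow> nat \<Rightarrow> complex mat"
    and \<Gamma> \<Delta> :: "nat \<Rightarrow> complex mat"
  assumes k1: "1 \<le> k" and kn: "k < n"
    and LA: "Lambda_A n v (\<lambda>i. if i = k \<or> i = 2*n-k then 1 else 0) B \<Gamma> \<Delta>"
begin

definition vv where "vv i = (if i = 0 then 1 else if i \<le> 2*n-1 then v i else 0)"
definition MM where "MM = Suc (\<Sum>i<2*n. v i)"

lemma vv0[simp]: "vv 0 = 1" by (simp add: vv_def)
lemma vvi[simp]: "1 \<le> i \<Longrightarrow> i \<le> 2*n-1 \<Longrightarrow> vv i = v i" by (simp add: vv_def)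

lemma vvM: "vv i \<le> MM"
proof -
  have "v i \<le> (\<Sum>i<2*n. v i)" if "i < 2*n" using that by (intro member_le_sum) auto
  moreover have "i < 2*n" if "i \<le> 2*n-1" "0 < i" using that kn by arith
  ultimately show ?thesis unfolding vv_def MM_def by force
qed

sublocale blk vv "2*n" MM by unfold_locales (rule vvM, simp add: MM_def)

lemma n2: "2 \<le> n" using k1 kn by auto

lemma Bc: "1 \<le> i \<Longrightarrow> i < 2*n-1 \<Longrightarrow> B i (i+1) \<in> carrier_mat (v i) (v (i+1)) \<and> B (i+1) i \<in> carrier_mat (v (i+1)) (v i)"
  using LA unfolding Lambda_A_def by blast

lemma GDc: "1 \<le> i \<Longrightarrow> i \<le> 2*n-1 \<Longrightarrow> \<Gamma> i \<in> carrier_mat (v i) (if i = k \<or> i = 2*n-k then 1 else 0)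
   \<and> \<Delta> i \<in> carrier_mat (if i = k \<or> i = 2*n-k then 1 else 0) (v i)"
  using LA unfolding Lambda_A_def by blast

definition sg :: "nat \<Rightarrow> complex" where "sg j = (if n \<le> j then -1 else 1)"

definition Ab where "Ab i j = (if j = i+1 \<and> 1 \<le> i \<and> j \<le> 2*n-1 then B i j else 0\<^sub>m (vv i) (vv j))"
definition Cb where "Cb i j = (if i = j+1 \<and> 1 \<le> j \<and> i \<le> 2*n-1 then sg j \<cdot>\<^sub>m B i j else 0\<^sub>m (vv i) (vv j))"
definition vb where "vb x X i j = (if i = x \<and> j = 0 then X else 0\<^sub>m (vv i) (vv j))"
definition Db where "Db a i j = (if i = 0 \<and> j = a then \<Delta> a else 0\<^sub>m (vv i) (vv j))"

definition "Am = bm Ab"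
definition "Cm = bm Cb"
definition "vecm x X = bm (vb x X)"
definition "gam b = vecm b (\<Gamma> b)"
definition "del a = bm (Db a)"

lemma Ab_c[simp]: "Ab i j \<in> carrier_mat (vv i) (vv j)"
proof (cases "j = i+1 \<and> 1 \<le> i \<and> j \<le> 2*n-1")
  case True
  then have "B i j \<in> carrier_mat (v i) (v j)" using Bc[of i] by auto
  moreover have "vv i = v i" "vv j = v j" using True by auto
  ultimately show ?thesis using True by (simp add: Ab_def)
qed (auto simp: Ab_def)

lemma Cb_c[simp]: "Cb i j \<in> carrier_mat (vv i) (vv j)"
proof (cases "i = j+1 \<and> 1 \<le> j \<and> i \<le> 2*n-1")
  case True
  then have "B i j \<in> carrier_mat (v i) (v j)" using Bc[of j] by auto
  moreover have "vv i = v i" "vv j = v j" using True by auto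
  ultimately show ?thesis using True by (simp add: Cb_def)
qed (auto simp: Cb_def)

lemma Ab_dim[simp]: "dim_row (Ab i j) = vv i" "dim_col (Ab i j) = vv j"
  using carrier_matD[OF Ab_c[of i j]] by auto
lemma Cb_dim[simp]: "dim_row (Cb i j) = vv i" "dim_col (Cb i j) = vv j"
  using carrier_matD[OF Cb_c[of i j]] by auto

lemma vb_c: "X \<in> carrier_mat (vv x) 1 \<Longrightarrow> vb x X i j \<in> carrier_mat (vv i) (vv j)"
  by (simp add: vb_def)

definition Kp where "Kp = 2*n-k"
lemma Kp_facts: "n < Kp" "Kp \<le> 2*n-1" "k < Kp" "1 \<le> Kp" "Kp < 2*n" using k1 kn by (auto simp: Kp_def)

lemma Gc: "b \<in> {k, Kp} \<Longrightarrow> \<Gamma> b \<in> carrier_mat (vv b) 1"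
  using GDc[of b] Kp_facts k1 kn by (auto simp: Kp_def)
lemma Dc: "a \<in> {k, Kp} \<Longrightarrow> \<Delta> a \<in> carrier_mat 1 (vv a)"
  using GDc[of a] Kp_facts k1 kn by (auto simp: Kp_def)

lemma Db_c: "a \<in> {k, Kp} \<Longrightarrow> Db a i j \<in> carrier_mat (vv i) (vv j)"
  using Dc by (simp add: Db_def)

lemma bm_zero0: "bm (\<lambda>i j. 0\<^sub>m (vv i) (vv j)) = 0\<^sub>m NN NN"
  by (rule bm_zero) simp

lemma A_vec:
  assumes x: "x < 2*n" and X: "X \<in> carrier_mat (vv x) 1"
  shows "Am * vecm x X = (if 2 \<le> x then vecm (x-1) (B (x-1) x * X) else 0\<^sub>m NN NN)"
proof -
  have "Am * vecm x X = bm (\<lambda>i l. if Suc i < 2*n then Ab i (Suc i) * vb x X (Suc i) l else 0\<^sub>m (vv i) (vv l))"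
    unfolding Am_def vecm_def
    apply (rule bm_mult[where \<phi>=Suc])
      apply simp
     apply (rule vb_c[OF X])
    apply (auto simp: Ab_def)
    done
  also have "\<dots> = (if 2 \<le> x then vecm (x-1) (B (x-1) x * X) else 0\<^sub>m NN NN)"
  proof (cases "2 \<le> x")
    case True
    have "bm (\<lambda>i l. if Suc i < 2*n then Ab i (Suc i) * vb x X (Suc i) l else 0\<^sub>m (vv i) (vv l))
        = bm (vb (x-1) (B (x-1) x * X))"
    proof (rule bm_cong)
      fix i l assume i: "i < 2*n" and l: "l < 2*n"
      show "(if Suc i < 2*n then Ab i (Suc i) * vb x X (Suc i) l else 0\<^sub>m (vv i) (vv l)) = vb (x-1) (B (x-1) x * X) i l"
      proof (cases "Suc i = x \<and> l = 0")
        case True then show ?thesis using x \<open>2 \<le> x\<close> by (auto simp: Ab_def vb_def)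
      next
        case False
        then have "vb x X (Suc i) l = 0\<^sub>m (vv (Suc i)) (vv l)" by (auto simp: vb_def)
        then show ?thesis using False \<open>2 \<le> x\<close> by (auto simp: vb_def)
      qed
    qed
    then show ?thesis using True by (simp add: vecm_def)
  next
    case False
    have "bm (\<lambda>i l. if Suc i < 2*n then Ab i (Suc i) * vb x X (Suc i) l else 0\<^sub>m (vv i) (vv l))
        = bm (\<lambda>i j. 0\<^sub>m (vv i) (vv j))"
    proof (rule bm_cong)
      fix i l assume i: "i < 2*n" and l: "l < 2*n"
      show "(if Suc i < 2*n then Ab i (Suc i) * vb x X (Suc i) l else 0\<^sub>m (vv i) (vv l)) = 0\<^sub>m (vv i) (vv l)"
      proof (cases "Suc i = x \<and> l = 0")
        case True then show ?thesis using x False X by (auto simp: Ab_def vb_def)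
      next
        case False
        then have "vb x X (Suc i) l = 0\<^sub>m (vv (Suc i)) (vv l)" by (auto simp: vb_def)
        then show ?thesis by auto
      qed
    qed
    then show ?thesis using False bm_zero0 by simp
  qed
  finally show ?thesis .
qed


lemma smult_smult_mat: "c \<cdot>\<^sub>m (d \<cdot>\<^sub>m (A::complex mat)) = (c * d) \<cdot>\<^sub>m A"
  by (rule eq_matI) auto

lemma C_vec:
  assumes x: "x < 2*n" and X: "X \<in> carrier_mat (vv x) 1"
  shows "Cm * vecm x X = (if 1 \<le> x \<and> Suc x \<le> 2*n-1 then vecm (Suc x) (sg x \<cdot>\<^sub>m (B (Suc x) x * X)) else 0\<^sub>m NN NN)"
proof -
  have "Cm * vecm x X = bm (\<lambda>i l. if i - 1 < 2*n then Cb i (i - 1) * vb x X (i - 1) l else 0\<^sub>m (vv i) (vv l))"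
    unfolding Cm_def vecm_def
    apply (rule bm_mult[where \<phi>="\<lambda>i. i - 1"])
      apply simp
     apply (rule vb_c[OF X])
    apply (auto simp: Cb_def)
    done
  also have "\<dots> = (if 1 \<le> x \<and> Suc x \<le> 2*n-1 then vecm (Suc x) (sg x \<cdot>\<^sub>m (B (Suc x) x * X)) else 0\<^sub>m NN NN)"
  proof (cases "1 \<le> x \<and> Suc x \<le> 2*n-1")
    case True
    have "bm (\<lambda>i l. if i - 1 < 2*n then Cb i (i - 1) * vb x X (i - 1) l else 0\<^sub>m (vv i) (vv l))
        = bm (vb (Suc x) (sg x \<cdot>\<^sub>m (B (Suc x) x * X)))"
    proof (rule bm_cong)
      fix i l assume i: "i < 2*n" and l: "l < 2*n"
      show "(if i - 1 < 2*n then Cb i (i - 1) * vb x X (i - 1) l else 0\<^sub>m (vv i) (vv l)) = vb (Suc x) (sg x \<cdot>\<^sub>m (B (Suc x) x * X)) i l"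
      proof (cases "i = Suc x \<and> l = 0")
        case True
        have Bc': "B (Suc x) x \<in> carrier_mat (v (Suc x)) (v x)" using Bc[of x] \<open>1 \<le> x \<and> Suc x \<le> 2*n-1\<close> by auto
        have X': "X \<in> carrier_mat (v x) 1" using X \<open>1 \<le> x \<and> Suc x \<le> 2*n-1\<close> by auto
        show ?thesis using True \<open>1 \<le> x \<and> Suc x \<le> 2*n-1\<close> i
          by (simp add: Cb_def vb_def mult_smult_assoc_mat[OF Bc' X'])
      next
        case False
        then have "vb x X (i - 1) l = 0\<^sub>m (vv (i - 1)) (vv l)" using \<open>1 \<le> x \<and> Suc x \<le> 2*n-1\<close> by (auto simp: vb_def)
        then show ?thesis using False i by (auto simp: vb_def)
      qed
    qed
    then show ?thesis using True by (simp add: vecm_def)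
  next
    case False
    have "bm (\<lambda>i l. if i - 1 < 2*n then Cb i (i - 1) * vb x X (i - 1) l else 0\<^sub>m (vv i) (vv l))
        = bm (\<lambda>i j. 0\<^sub>m (vv i) (vv j))"
    proof (rule bm_cong)
      fix i l assume i: "i < 2*n" and l: "l < 2*n"
      show "(if i - 1 < 2*n then Cb i (i - 1) * vb x X (i - 1) l else 0\<^sub>m (vv i) (vv l)) = 0\<^sub>m (vv i) (vv l)"
      proof (cases "i - 1 = x \<and> l = 0")
        case True
        then have "Cb i (i - 1) = 0\<^sub>m (vv i) (vv (i - 1))" using False by (auto simp: Cb_def)
        moreover have "vb x X (i - 1) l = X" using True by (simp add: vb_def)
        moreover have "0\<^sub>m (vv i) (vv x) * X = 0\<^sub>m (vv i) (vv 0)" using X by (simp add: left_mult_zero_mat)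
        ultimately show ?thesis using True i by simp
      next
        case False
        then have "vb x X (i - 1) l = 0\<^sub>m (vv (i - 1)) (vv l)" by (auto simp: vb_def)
        then show ?thesis using i by auto
      qed
    qed
    then show ?thesis using False bm_zero0 by (simp only: if_False)
  qed
  finally show ?thesis .
qed

lemma D_vec:
  assumes a: "a \<in> {k, Kp}" and x: "x < 2*n" and X: "X \<in> carrier_mat (vv x) 1"
  shows "del a * vecm x X = (if x = a then vecm 0 (\<Delta> a * X) else 0\<^sub>m NN NN)"
proof -
  have a2: "a < 2*n" using a Kp_facts kn by auto
  have "del a * vecm x X = bm (\<lambda>i l. if a < 2*n then Db a i a * vb x X a l else 0\<^sub>m (vv i) (vv l))"
    unfolding del_def vecm_def
    apply (rule bm_mult[where \<phi>="\<lambda>i. a"])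
      apply (rule Db_c[OF a])
     apply (rule vb_c[OF X])
    apply (auto simp: Db_def)
    done
  also have "\<dots> = (if x = a then vecm 0 (\<Delta> a * X) else 0\<^sub>m NN NN)"
  proof (cases "x = a")
    case True
    have "bm (\<lambda>i l. if a < 2*n then Db a i a * vb x X a l else 0\<^sub>m (vv i) (vv l)) = bm (vb 0 (\<Delta> a * X))"
    proof (rule bm_cong)
      fix i l assume i: "i < 2*n" and l: "l < 2*n"
      have dc: "dim_col (Db a i a) = vv a" "dim_row (Db a i a) = vv i" using carrier_matD[OF Db_c[OF a]] by auto
      show "(if a < 2*n then Db a i a * vb x X a l else 0\<^sub>m (vv i) (vv l)) = vb 0 (\<Delta> a * X) i l"
      proof (cases "i = 0 \<and> l = 0")
        case True then show ?thesis using \<open>x = a\<close> a2 by (simp add: Db_def vb_def)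
      next
        case False
        show ?thesis
        proof (cases "l = 0")
          case True
          then have "i \<noteq> 0" using False by auto
          then have "Db a i a = 0\<^sub>m (vv i) (vv a)" by (simp add: Db_def)
          then show ?thesis using True \<open>x = a\<close> a2 X \<open>i \<noteq> 0\<close> by (simp add: vb_def)
        next
          case False
          then have "vb x X a l = 0\<^sub>m (vv a) (vv l)" by (simp add: vb_def)
          then show ?thesis using False a2 dc by (simp add: vb_def)
        qed
      qed
    qed
    then show ?thesis using True by (simp add: vecm_def)
  next
    case False
    have "bm (\<lambda>i l. if a < 2*n then Db a i a * vb x X a l else 0\<^sub>m (vv i) (vv l)) = bm (\<lambda>i j. 0\<^sub>m (vv i) (vv j))"
    proof (rule bm_cong)
      fix i l assume i: "i < 2*n" and l: "l < 2*n"
      have dc: "dim_col (Db a i a) = vv a" "dim_row (Db a i a) = vv i" using carrier_matD[OF Db_c[OF a]] by auto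
      have "vb x X a l = 0\<^sub>m (vv a) (vv l)" using False by (simp add: vb_def)
      then show "(if a < 2*n then Db a i a * vb x X a l else 0\<^sub>m (vv i) (vv l)) = 0\<^sub>m (vv i) (vv l)"
        using dc by simp
    qed
    then show ?thesis using False bm_zero0 by simp
  qed
  finally show ?thesis .
qed

lemma NN_pos: "0 < NN" using kn Mpos by (simp add: NN_def)

lemma vec00: "vecm 0 Z $$ (0,0) = Z $$ (0,0)"
  using NN_pos Mpos by (simp add: vecm_def bm_index vb_def)

lemma vecm_c[simp]: "vecm x X \<in> carrier_mat NN NN" by (simp add: vecm_def)
lemma vecm_dim[simp]: "dim_row (vecm x X) = NN" "dim_col (vecm x X) = NN" by (simp_all add: vecm_def)

lemma Am_c[simp]: "Am \<in> carrier_mat NN NN" by (simp add: Am_def)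
lemma Am_dim[simp]: "dim_row Am = NN" "dim_col Am = NN" by (simp_all add: Am_def)
lemma Cm_dim[simp]: "dim_row Cm = NN" "dim_col Cm = NN" by (simp_all add: Cm_def)
lemma one_smult_mat'[simp]: "(1::complex) \<cdot>\<^sub>m A = A" by (rule eq_matI) auto
lemma Cm_c[simp]: "Cm \<in> carrier_mat NN NN" by (simp add: Cm_def)
lemma del_c[simp]: "del a \<in> carrier_mat NN NN" by (simp add: del_def)
lemma gam_c[simp]: "gam a \<in> carrier_mat NN NN" by (simp add: gam_def)

lemma mono_refl: "mono_path B v q q = 1\<^sub>m (v q)"
  by (subst mono_path.simps) simp
lemma mono_up: "r \<le> q \<Longrightarrow> mono_path B v (Suc q) r = B (Suc q) q * mono_path B v q r"
  by (subst mono_path.simps) simp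
lemma mono_down: "q < r \<Longrightarrow> mono_path B v q r = B q (Suc q) * mono_path B v (Suc q) r"
  by (subst mono_path.simps) simp

lemma mono_up_c: "1 \<le> r \<Longrightarrow> r + p \<le> 2*n-1 \<Longrightarrow> mono_path B v (r+p) r \<in> carrier_mat (v (r+p)) (v r)"
proof (induction p)
  case 0 then show ?case by (simp add: mono_refl)
next
  case (Suc p)
  have "B (Suc (r+p)) (r+p) \<in> carrier_mat (v (Suc (r+p))) (v (r+p))" using Bc[of "r+p"] Suc.prems by auto
  then show ?case using Suc by (simp add: mono_up)
qed

lemma mono_down_c: "p < r \<Longrightarrow> r \<le> 2*n-1 \<Longrightarrow> mono_path B v (r-p) r \<in> carrier_mat (v (r-p)) (v r)"
proof (induction p)
  case 0 then show ?case by (simp add: mono_refl)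
next
  case (Suc p)
  have e: "Suc (r - Suc p) = r - p" using Suc.prems by auto
  have "B (r - Suc p) (Suc (r - Suc p)) \<in> carrier_mat (v (r - Suc p)) (v (Suc (r - Suc p)))"
    using Bc[of "r - Suc p"] Suc.prems by auto
  then show ?case using Suc e by (simp add: mono_down)
qed

lemma A_pow_vec:
  assumes x: "1 \<le> x" "x < 2*n" and X: "X \<in> carrier_mat (vv x) 1"
  shows "Am ^\<^sub>m q * vecm x X = (if q < x then vecm (x-q) (mono_path B v (x-q) x * X) else 0\<^sub>m NN NN)"
proof (induction q)
  case 0
  have X': "X \<in> carrier_mat (v x) 1" using X x by auto
  have "1\<^sub>m (v x) * X = X" using X' by simp
  then show ?case using x by (simp add: mono_refl)
next
  case (Suc q)
  have X': "X \<in> carrier_mat (v x) 1" using X x by auto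
  have st: "Am ^\<^sub>m Suc q * vecm x X = Am * (Am ^\<^sub>m q * vecm x X)"
    using pow_mat_Suc_left[OF Am_c, of q] assoc_mult_mat[of Am NN NN "Am ^\<^sub>m q" NN "vecm x X" NN]
    by (simp del: pow_mat.simps)
  show ?case
  proof (cases "q < x")
    case True
    have P: "mono_path B v (x-q) x \<in> carrier_mat (v (x-q)) (v x)" using mono_down_c[of q x] True x by auto
    have vq: "vv (x-q) = v (x-q)" using True x by auto
    have PX: "mono_path B v (x-q) x * X \<in> carrier_mat (vv (x-q)) 1" using P X' vq by auto
    have xq: "x - q < 2*n" using x by auto
    have IH: "Am ^\<^sub>m q * vecm x X = vecm (x-q) (mono_path B v (x-q) x * X)" using True Suc.IH by simp
    show ?thesis
    proof (cases "Suc q < x")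
      case True
      define y where "y = x - Suc q"
      have y: "x - q = Suc y" "x - Suc q = y" using True unfolding y_def by arith+
      have y1: "1 \<le> y" "y < x" using True y by auto
      have Bc': "B y (Suc y) \<in> carrier_mat (v y) (v (Suc y))" using Bc[of y] y1 x by auto
      have P': "mono_path B v (Suc y) x \<in> carrier_mat (v (Suc y)) (v x)" using P y by simp
      have m: "mono_path B v y x = B y (Suc y) * mono_path B v (Suc y) x"
        using mono_down[of y x] y1 by simp
      have "Am ^\<^sub>m Suc q * vecm x X = Am * vecm (Suc y) (mono_path B v (Suc y) x * X)" unfolding st IH y(1) ..
      also have "\<dots> = vecm y (B y (Suc y) * (mono_path B v (Suc y) x * X))"
      proof -
        have Y1: "mono_path B v (Suc y) x * X \<in> carrier_mat (vv (Suc y)) 1" using PX unfolding y(1) .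
        have "Suc y < 2*n" using xq unfolding y(1) .
        from A_vec[OF this Y1] show ?thesis using y1 by simp
      qed
      also have "\<dots> = vecm y (mono_path B v y x * X)"
        using m assoc_mult_mat[OF Bc' P' X'] by simp
      finally show ?thesis using True unfolding y(2) by simp
    next
      case False
      then have x1: "x - q = 1" using \<open>q < x\<close> by auto
      have "Am ^\<^sub>m Suc q * vecm x X = Am * vecm 1 (mono_path B v (x-q) x * X)" unfolding st IH x1 ..
      also have "\<dots> = 0\<^sub>m NN NN"
      proof -
        have Y1: "mono_path B v (x-q) x * X \<in> carrier_mat (vv 1) 1" using PX unfolding x1 .
        have "(1::nat) < 2*n" using kn by arith
        from A_vec[OF this Y1] show ?thesis by simp
      qed
      finally show ?thesis using False by simp
    qed
  next
    case False
    then show ?thesis using st Suc.IH by simp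
  qed
qed

definition fl :: "nat \<Rightarrow> nat \<Rightarrow> nat" where "fl x p = x + p - max x n"

lemma fl_Suc: "fl x (Suc p) = fl x p + (if n \<le> x + p then 1 else 0)"
  unfolding fl_def by (cases "n \<le> x+p") (auto simp: max_def)

lemma C_pow_vec:
  assumes x: "1 \<le> x" "x < 2*n" and X: "X \<in> carrier_mat (vv x) 1"
  shows "Cm ^\<^sub>m p * vecm x X = (if x + p \<le> 2*n-1 then vecm (x+p) ((-1)^(fl x p) \<cdot>\<^sub>m (mono_path B v (x+p) x * X)) else 0\<^sub>m NN NN)"
proof (induction p)
  case 0
  have "X \<in> carrier_mat (v x) 1" using X x by auto
  moreover have "fl x 0 = 0" by (simp add: fl_def)
  moreover have "x \<le> 2*n-1" using x by arith
  ultimately show ?case using x by (simp add: mono_refl)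
next
  case (Suc p)
  have "Cm ^\<^sub>m Suc p * vecm x X = Cm * (Cm ^\<^sub>m p * vecm x X)"
    by (simp add: pow_mat_Suc_left[OF Cm_c] sq_assoc[of _ NN] del: pow_mat.simps)
  also have "\<dots> = (if x + Suc p \<le> 2*n-1 then vecm (x + Suc p) ((-1)^(fl x (Suc p)) \<cdot>\<^sub>m (mono_path B v (x + Suc p) x * X)) else 0\<^sub>m NN NN)"
  proof (cases "x + p \<le> 2*n-1")
    case True
    have P: "mono_path B v (x+p) x \<in> carrier_mat (v (x+p)) (v x)" using mono_up_c[of x p] True x by auto
    have X': "X \<in> carrier_mat (v x) 1" using X x by auto
    have PX: "(-1)^(fl x p) \<cdot>\<^sub>m (mono_path B v (x+p) x * X) \<in> carrier_mat (vv (x+p)) 1" using P X' True x by auto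
    have "Cm * (Cm ^\<^sub>m p * vecm x X) = Cm * vecm (x+p) ((-1)^(fl x p) \<cdot>\<^sub>m (mono_path B v (x+p) x * X))" using True Suc by simp
    also have "\<dots> = (if 1 \<le> x + p \<and> Suc (x + p) \<le> 2*n-1 then vecm (Suc (x+p)) (sg (x+p) \<cdot>\<^sub>m (B (Suc (x+p)) (x+p) * ((-1)^(fl x p) \<cdot>\<^sub>m (mono_path B v (x+p) x * X)))) else 0\<^sub>m NN NN)"
      using C_vec[OF _ PX] x True by auto
    also have "\<dots> = (if x + Suc p \<le> 2*n-1 then vecm (x + Suc p) ((-1)^(fl x (Suc p)) \<cdot>\<^sub>m (mono_path B v (x + Suc p) x * X)) else 0\<^sub>m NN NN)"
    proof (cases "x + Suc p \<le> 2*n-1")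
      case True
      have Bc': "B (Suc (x+p)) (x+p) \<in> carrier_mat (v (Suc (x+p))) (v (x+p))" using Bc[of "x+p"] True x by auto
      have m: "mono_path B v (Suc (x + p)) x = B (Suc (x+p)) (x+p) * mono_path B v (x+p) x"
        using mono_up[of x "x+p"] by simp
      have sgn: "sg (x+p) * (-1)^(fl x p) = ((-1)^(fl x (Suc p)) :: complex)"
        by (simp add: fl_Suc sg_def)
      have "sg (x+p) \<cdot>\<^sub>m (B (Suc (x+p)) (x+p) * ((-1)^(fl x p) \<cdot>\<^sub>m (mono_path B v (x+p) x * X)))
          = (sg (x+p) * (-1)^(fl x p)) \<cdot>\<^sub>m (B (Suc (x+p)) (x+p) * (mono_path B v (x+p) x * X))"
        using Bc' P X' by (simp add: mult_smult_distrib[of _ _ "v (x+p)" _ 1] smult_smult_mat)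
      also have "\<dots> = (-1)^(fl x (Suc p)) \<cdot>\<^sub>m (mono_path B v (x + Suc p) x * X)"
        using Bc' P X' by (simp add: sgn m assoc_mult_mat[OF Bc' P X'])
      finally show ?thesis using True x by simp
    qed auto
    finally show ?thesis .
  next
    case False
    then show ?thesis using Suc by simp
  qed
  finally show ?case .
qed


lemma del_dim[simp]: "dim_row (del a) = NN" "dim_col (del a) = NN" by (simp_all add: del_def)
lemma gam_dim[simp]: "dim_row (gam a) = NN" "dim_col (gam a) = NN" by (simp_all add: gam_def)

definition sc where "sc a b Z = (del a * Z * gam b) $$ (0,0)"
definition gs where "gs a b p q = sc a b (Cm ^\<^sub>m p * Am ^\<^sub>m q)"
definition hs where "hs a b p q = sc a b (Am ^\<^sub>m q * Cm ^\<^sub>m p)"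

lemma sc_vec:
  assumes a: "a \<in> {k, Kp}" and x: "x < 2*n" and Y: "Y \<in> carrier_mat (vv x) 1"
  shows "(del a * vecm x Y) $$ (0,0) = (if x = a then (\<Delta> a * Y) $$ (0,0) else 0)"
  using D_vec[OF a x Y] NN_pos by (simp add: vec00)

lemma del_zero: "(del a * 0\<^sub>m NN NN) $$ (0,0) = 0"
  using NN_pos by simp

lemma ext3:
  fixes D M1 M2 G :: "complex mat"
  assumes D: "D \<in> carrier_mat 1 na" and M1: "M1 \<in> carrier_mat na nc" and M2: "M2 \<in> carrier_mat nc nb"
    and G: "G \<in> carrier_mat nb 1"
  shows "(D * (c \<cdot>\<^sub>m (M1 * (M2 * G)))) $$ (0,0) = c * (D * (M1 * M2) * G) $$ (0,0)"
proof -
  have "D * (c \<cdot>\<^sub>m (M1 * (M2 * G))) = c \<cdot>\<^sub>m (D * (M1 * (M2 * G)))"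
    using mult_smult_distrib[of D 1 na "M1 * (M2 * G)" 1 c] D M1 M2 G by simp
  moreover have "D * (M1 * (M2 * G)) = D * (M1 * M2) * G"
    using D M1 M2 G by (simp add: assoc_mult_mat[of D 1 na "M1*M2" nb G 1] assoc_mult_mat[OF M1 M2 G])
  ultimately show ?thesis using D G by simp
qed

lemma ab_facts: "a \<in> {k, Kp} \<Longrightarrow> 1 \<le> a \<and> a < 2*n \<and> a \<le> 2*n-1"
  using Kp_facts k1 kn by auto

lemma gs_val:
  assumes a: "a \<in> {k, Kp}" and b: "b \<in> {k, Kp}"
  shows "gs a b p q = (if q < b \<and> b - q + p = a then (-1)^(fl (b-q) p) * (\<Delta> a * path3 B v a (b-q) b * \<Gamma> b) $$ (0,0) else 0)"
proof -
  have bb: "1 \<le> b" "b < 2*n" "b \<le> 2*n-1" using ab_facts[OF b] by auto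
  have aa: "1 \<le> a" "a < 2*n" "a \<le> 2*n-1" using ab_facts[OF a] by auto
  have G: "\<Gamma> b \<in> carrier_mat (vv b) 1" using Gc[OF b] .
  have G': "\<Gamma> b \<in> carrier_mat (v b) 1" using G bb by simp
  have D': "\<Delta> a \<in> carrier_mat 1 (v a)" using Dc[OF a] aa by simp
  have e0: "gs a b p q = (del a * (Cm ^\<^sub>m p * (Am ^\<^sub>m q * gam b))) $$ (0,0)"
    by (simp add: gs_def sc_def sq_assoc[of _ NN])
  show ?thesis
  proof (cases "q < b")
    case False
    have "Am ^\<^sub>m q * gam b = 0\<^sub>m NN NN" using A_pow_vec[OF bb(1,2) G, of q] False by (simp add: gam_def)
    then show ?thesis using e0 False NN_pos by simp
  next
    case True
    define y where "y = b - q"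
    have y: "1 \<le> y" "y < 2*n" "y \<le> b" using True bb unfolding y_def by auto
    have M2: "mono_path B v y b \<in> carrier_mat (v y) (v b)" using mono_down_c[of q b] True bb unfolding y_def by auto
    have Y1: "mono_path B v y b * \<Gamma> b \<in> carrier_mat (vv y) 1" using M2 G' y bb by auto
    have A1: "Am ^\<^sub>m q * gam b = vecm y (mono_path B v y b * \<Gamma> b)"
      using A_pow_vec[OF bb(1,2) G, of q] True by (simp add: gam_def y_def)
    show ?thesis
    proof (cases "y + p \<le> 2*n-1")
      case True
      have M1: "mono_path B v (y+p) y \<in> carrier_mat (v (y+p)) (v y)" using mono_up_c[OF y(1) True] .
      have Zc: "(-1)^(fl y p) \<cdot>\<^sub>m (mono_path B v (y+p) y * (mono_path B v y b * \<Gamma> b)) \<in> carrier_mat (vv (y+p)) 1"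
        using M1 M2 G' True y by auto
      have C1: "Cm ^\<^sub>m p * vecm y (mono_path B v y b * \<Gamma> b) = vecm (y+p) ((-1)^(fl y p) \<cdot>\<^sub>m (mono_path B v (y+p) y * (mono_path B v y b * \<Gamma> b)))"
        using C_pow_vec[OF y(1,2) Y1, of p] True by simp
      have yp: "y + p < 2*n" using True bb by arith
      have "gs a b p q = (if y + p = a then (\<Delta> a * ((-1)^(fl y p) \<cdot>\<^sub>m (mono_path B v (y+p) y * (mono_path B v y b * \<Gamma> b)))) $$ (0,0) else 0)"
        using e0 A1 C1 sc_vec[OF a yp Zc] by simp
      also have "\<dots> = (if y + p = a then (-1)^(fl y p) * (\<Delta> a * path3 B v a y b * \<Gamma> b) $$ (0,0) else 0)"
      proof (cases "y + p = a")
        case True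
        have M1': "mono_path B v a y \<in> carrier_mat (v a) (v y)" using M1 True by simp
        show ?thesis using ext3[OF D' M1' M2 G', of "(-1)^(fl y p)"] True by (simp add: path3_def)
      qed simp
      finally show ?thesis using \<open>q < b\<close> unfolding y_def by simp
    next
      case False
      have "Cm ^\<^sub>m p * vecm y (mono_path B v y b * \<Gamma> b) = 0\<^sub>m NN NN"
        using C_pow_vec[OF y(1,2) Y1, of p] False by simp
      moreover have "b - q + p \<noteq> a" using False aa unfolding y_def by arith
      ultimately show ?thesis using e0 A1 NN_pos by simp
    qed
  qed
qed

lemma hs_val:
  assumes a: "a \<in> {k, Kp}" and b: "b \<in> {k, Kp}"
  shows "hs a b p q = (if b + p \<le> 2*n-1 \<and> q < b + p \<and> b + p - q = a then (-1)^(fl b p) * (\<Delta> a * path3 B v a (b+p) b * \<Gamma> b) $$ (0,0) else 0)"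
proof -
  have bb: "1 \<le> b" "b < 2*n" "b \<le> 2*n-1" using ab_facts[OF b] by auto
  have aa: "1 \<le> a" "a < 2*n" "a \<le> 2*n-1" using ab_facts[OF a] by auto
  have G: "\<Gamma> b \<in> carrier_mat (vv b) 1" using Gc[OF b] .
  have G': "\<Gamma> b \<in> carrier_mat (v b) 1" using G bb by simp
  have D': "\<Delta> a \<in> carrier_mat 1 (v a)" using Dc[OF a] aa by simp
  have e0: "hs a b p q = (del a * (Am ^\<^sub>m q * (Cm ^\<^sub>m p * gam b))) $$ (0,0)"
    by (simp add: hs_def sc_def sq_assoc[of _ NN])
  show ?thesis
  proof (cases "b + p \<le> 2*n-1")
    case False
    have "Cm ^\<^sub>m p * gam b = 0\<^sub>m NN NN" using C_pow_vec[OF bb(1,2) G, of p] False by (simp add: gam_def)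
    then show ?thesis using e0 False NN_pos by simp
  next
    case True
    define y where "y = b + p"
    have y: "1 \<le> y" "y < 2*n" "b \<le> y" using True bb unfolding y_def by auto
    have M2: "mono_path B v y b \<in> carrier_mat (v y) (v b)" using mono_up_c[OF bb(1) True] unfolding y_def .
    have Zc1: "(-1)^(fl b p) \<cdot>\<^sub>m (mono_path B v y b * \<Gamma> b) \<in> carrier_mat (vv y) 1" using M2 G' y True by auto
    have C1: "Cm ^\<^sub>m p * gam b = vecm y ((-1)^(fl b p) \<cdot>\<^sub>m (mono_path B v y b * \<Gamma> b))"
      using C_pow_vec[OF bb(1,2) G, of p] True by (simp add: gam_def y_def)
    show ?thesis
    proof (cases "q < y")
      case True
      define z where "z = y - q"
      have z: "1 \<le> z" "z < 2*n" using True y unfolding z_def by auto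
      have M1: "mono_path B v z y \<in> carrier_mat (v z) (v y)" using mono_down_c[of q y] True y unfolding z_def by auto
      have Zc: "mono_path B v z y * ((-1)^(fl b p) \<cdot>\<^sub>m (mono_path B v y b * \<Gamma> b)) \<in> carrier_mat (vv z) 1"
        using M1 M2 G' z by auto
      have A1: "Am ^\<^sub>m q * vecm y ((-1)^(fl b p) \<cdot>\<^sub>m (mono_path B v y b * \<Gamma> b)) = vecm z (mono_path B v z y * ((-1)^(fl b p) \<cdot>\<^sub>m (mono_path B v y b * \<Gamma> b)))"
        using A_pow_vec[OF y(1,2) Zc1, of q] True unfolding z_def by simp
      have "hs a b p q = (if z = a then (\<Delta> a * (mono_path B v z y * ((-1)^(fl b p) \<cdot>\<^sub>m (mono_path B v y b * \<Gamma> b)))) $$ (0,0) else 0)"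
        using e0 A1 C1 sc_vec[OF a z(2) Zc] by simp
      also have "\<dots> = (if z = a then (-1)^(fl b p) * (\<Delta> a * path3 B v a y b * \<Gamma> b) $$ (0,0) else 0)"
      proof (cases "z = a")
        case True
        have M1': "mono_path B v a y \<in> carrier_mat (v a) (v y)" using M1 True by simp
        have "mono_path B v a y * ((-1)^(fl b p) \<cdot>\<^sub>m (mono_path B v y b * \<Gamma> b)) = (-1)^(fl b p) \<cdot>\<^sub>m (mono_path B v a y * (mono_path B v y b * \<Gamma> b))"
          using mult_smult_distrib[of "mono_path B v a y" "v a" "v y" "mono_path B v y b * \<Gamma> b" 1 "(-1)^(fl b p)"] M1' M2 G' by simp
        then show ?thesis using ext3[OF D' M1' M2 G', of "(-1)^(fl b p)"] True by (simp add: path3_def)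
      qed simp
      finally show ?thesis using \<open>b + p \<le> 2*n-1\<close> True unfolding z_def y_def by simp
    next
      case False
      have "Am ^\<^sub>m q * vecm y ((-1)^(fl b p) \<cdot>\<^sub>m (mono_path B v y b * \<Gamma> b)) = 0\<^sub>m NN NN"
        using A_pow_vec[OF y(1,2) Zc1, of q] False by simp
      then show ?thesis using e0 C1 NN_pos False unfolding y_def by simp
    qed
  qed
qed


lemma Am_nil: "Am ^\<^sub>m NN = 0\<^sub>m NN NN"
proof (rule upper_nilpotent[OF Am_c])
  fix r s assume r: "r < NN" and s: "s < NN" and sr: "s \<le> r"
  have "s div MM \<le> r div MM" using sr by (simp add: div_le_mono)
  then have "s div MM \<noteq> r div MM + 1" by auto
  then show "Am $$ (r,s) = 0" using r s by (simp add: Am_def bm_index Ab_def)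
qed

lemma Cm_nil: "Cm ^\<^sub>m NN = 0\<^sub>m NN NN"
proof (rule lower_nilpotent[OF Cm_c])
  fix r s assume r: "r < NN" and s: "s < NN" and sr: "r \<le> s"
  have "r div MM \<le> s div MM" using sr by (simp add: div_le_mono)
  then have "r div MM \<noteq> s div MM + 1" by auto
  then show "Cm $$ (r,s) = 0" using r s by (simp add: Cm_def bm_index Cb_def)
qed

definition Yz where "Yz i = Bz n v B i (i+1) * Bz n v B (i+1) i"
definition Xz where "Xz i = Bz n v B i (i-1) * Bz n v B (i-1) i"

lemma Bz_in: "1 \<le> i \<Longrightarrow> i \<le> 2*n-1 \<Longrightarrow> 1 \<le> j \<Longrightarrow> j \<le> 2*n-1 \<Longrightarrow> Bz n v B i j = B i j"
  by (simp add: Bz_def)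
lemma Bz_out: "\<not> (1 \<le> i \<and> i \<le> 2*n-1 \<and> 1 \<le> j \<and> j \<le> 2*n-1) \<Longrightarrow> Bz n v B i j = 0\<^sub>m (v i) (v j)"
  unfolding Bz_def by auto

lemma n0: "0 < n" "(0::nat) < 2*n" using kn by auto

lemma rel_lt: "1 \<le> i \<Longrightarrow> i \<le> n-1 \<Longrightarrow> Yz i - Xz i = \<Gamma> i * \<Delta> i"
  using LA unfolding Lambda_A_def Yz_def Xz_def by simp
lemma rel_eq: "- Xz n - Yz n = \<Gamma> n * \<Delta> n"
  using LA unfolding Lambda_A_def Yz_def Xz_def by simp
lemma rel_gt: "n+1 \<le> i \<Longrightarrow> i \<le> 2*n-1 \<Longrightarrow> Xz i - Yz i = \<Gamma> i * \<Delta> i"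
  using LA unfolding Lambda_A_def Yz_def Xz_def by simp

lemma Yz_c: "1 \<le> i \<Longrightarrow> i \<le> 2*n-1 \<Longrightarrow> Yz i \<in> carrier_mat (v i) (v i)"
proof (cases "i + 1 \<le> 2*n-1")
  case True
  assume i: "1 \<le> i" "i \<le> 2*n-1"
  have "B i (i+1) \<in> carrier_mat (v i) (v (i+1))" "B (i+1) i \<in> carrier_mat (v (i+1)) (v i)" using Bc[of i] True i by auto
  then show ?thesis using True i by (simp add: Yz_def Bz_in)
next
  case False
  assume i: "1 \<le> i" "i \<le> 2*n-1"
  then show ?thesis using False by (simp add: Yz_def Bz_out)
qed

lemma Xz_c: "1 \<le> i \<Longrightarrow> i \<le> 2*n-1 \<Longrightarrow> Xz i \<in> carrier_mat (v i) (v i)"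
proof (cases "2 \<le> i")
  case True
  assume i: "1 \<le> i" "i \<le> 2*n-1"
  have e: "i - 1 + 1 = i" using i by simp
  have "B (i-1) (i-1+1) \<in> carrier_mat (v (i-1)) (v (i-1+1))" "B (i-1+1) (i-1) \<in> carrier_mat (v (i-1+1)) (v (i-1))"
    using Bc[of "i-1"] True i by auto
  then have "B (i-1) i \<in> carrier_mat (v (i-1)) (v i)" "B i (i-1) \<in> carrier_mat (v i) (v (i-1))" unfolding e .
  then show ?thesis using True i by (simp add: Xz_def Bz_in)
next
  case False
  assume i: "1 \<le> i" "i \<le> 2*n-1"
  then show ?thesis using False by (simp add: Xz_def Bz_out)
qed

lemma GD_c: "1 \<le> i \<Longrightarrow> i \<le> 2*n-1 \<Longrightarrow> \<Gamma> i * \<Delta> i \<in> carrier_mat (v i) (v i)"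
  using GDc[of i] by auto

definition ACb where "ACb i l = (if Suc i < 2*n then Ab i (Suc i) * Cb (Suc i) l else 0\<^sub>m (vv i) (vv l))"
definition CAb where "CAb i l = (if i - 1 < 2*n then Cb i (i - 1) * Ab (i - 1) l else 0\<^sub>m (vv i) (vv l))"
definition GDb where "GDb b i l = (if (0::nat) < 2*n then vb b (\<Gamma> b) i 0 * Db b 0 l else 0\<^sub>m (vv i) (vv l))"

lemma ACb_diag: "1 \<le> i \<Longrightarrow> i \<le> 2*n-1 \<Longrightarrow> ACb i i = sg i \<cdot>\<^sub>m Yz i"
proof (cases "i + 1 \<le> 2*n-1")
  case True
  assume i: "1 \<le> i" "i \<le> 2*n-1"
  have c: "B i (i+1) \<in> carrier_mat (v i) (v (i+1))" "B (i+1) i \<in> carrier_mat (v (i+1)) (v i)" using Bc[of i] True i by auto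
  have si: "Suc i < 2*n" using True by arith
  have "ACb i i = B i (i+1) * (sg i \<cdot>\<^sub>m B (i+1) i)" using True i si by (simp add: ACb_def Ab_def Cb_def)
  also have "\<dots> = sg i \<cdot>\<^sub>m (B i (i+1) * B (i+1) i)" using c by (rule mult_smult_distrib)
  finally show ?thesis using True i by (simp add: Yz_def Bz_in)
next
  case False
  assume i: "1 \<le> i" "i \<le> 2*n-1"
  then have "ACb i i = 0\<^sub>m (v i) (v i)" using False by (simp add: ACb_def Ab_def)
  moreover have "Yz i = 0\<^sub>m (v i) (v i)" using False i by (simp add: Yz_def Bz_out)
  ultimately show ?thesis by simp
qed

lemma CAb_diag: "1 \<le> i \<Longrightarrow> i \<le> 2*n-1 \<Longrightarrow> CAb i i = sg (i-1) \<cdot>\<^sub>m Xz i"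
proof (cases "2 \<le> i")
  case True
  assume i: "1 \<le> i" "i \<le> 2*n-1"
  have e: "i - 1 + 1 = i" using i by simp
  have "B (i-1) (i-1+1) \<in> carrier_mat (v (i-1)) (v (i-1+1))" "B (i-1+1) (i-1) \<in> carrier_mat (v (i-1+1)) (v (i-1))"
    using Bc[of "i-1"] True i by auto
  then have c: "B (i-1) i \<in> carrier_mat (v (i-1)) (v i)" "B i (i-1) \<in> carrier_mat (v i) (v (i-1))" unfolding e .
  have f: "i - 1 < 2*n" "Suc (i - 1) = i" "1 \<le> i - 1" using True i by arith+
  have "CAb i i = (sg (i-1) \<cdot>\<^sub>m B i (i-1)) * B (i-1) i" using True i f by (simp add: CAb_def Ab_def Cb_def)
  also have "\<dots> = sg (i-1) \<cdot>\<^sub>m (B i (i-1) * B (i-1) i)" using c(2,1) by (rule mult_smult_assoc_mat)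
  finally show ?thesis using True i by (simp add: Xz_def Bz_in)
next
  case False
  assume i: "1 \<le> i" "i \<le> 2*n-1"
  then have i1: "i = 1" using False by simp
  have "CAb i i = 0\<^sub>m (v i) (v i)" using i1 kn by (simp add: CAb_def Cb_def)
  moreover have "Xz i = 0\<^sub>m (v i) (v i)" using i1 by (simp add: Xz_def Bz_out)
  ultimately show ?thesis by simp
qed

lemma GDb_diag_sum: "1 \<le> i \<Longrightarrow> i \<le> 2*n-1 \<Longrightarrow> GDb k i i + GDb Kp i i = \<Gamma> i * \<Delta> i"
proof -
  assume i: "1 \<le> i" "i \<le> 2*n-1"
  have ne: "k \<noteq> Kp" using Kp_facts by simp
  have GDi: "\<Gamma> i * \<Delta> i \<in> carrier_mat (v i) (v i)" using GD_c[OF i] .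
  consider "i = k" | "i = Kp" | "i \<noteq> k" "i \<noteq> Kp" by blast
  then show ?thesis
  proof cases
    case 1
    have "GDb Kp i i = 0\<^sub>m (v i) (v i)" using 1 ne i Gc[of k] n0 by (simp add: GDb_def vb_def Db_def)
    moreover have "GDb k i i = \<Gamma> i * \<Delta> i" using 1 n0 by (simp add: GDb_def vb_def Db_def)
    ultimately show ?thesis using GDi by simp
  next
    case 2
    have "GDb k i i = 0\<^sub>m (v i) (v i)" using 2 ne i Gc[of Kp] n0 by (simp add: GDb_def vb_def Db_def)
    moreover have "GDb Kp i i = \<Gamma> i * \<Delta> i" using 2 n0 by (simp add: GDb_def vb_def Db_def)
    ultimately show ?thesis using GDi by simp
  next
    case 3
    have w0: "\<Gamma> i \<in> carrier_mat (v i) 0" "\<Delta> i \<in> carrier_mat 0 (v i)" using GDc[OF i] 3 by (auto simp: Kp_def)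
    have "\<Gamma> i * \<Delta> i = 0\<^sub>m (v i) (v i)" using w0 by (intro eq_matI) (auto simp: scalar_prod_def)
    moreover have "GDb k i i = 0\<^sub>m (v i) (v i)" "GDb Kp i i = 0\<^sub>m (v i) (v i)" using 3 i n0 by (simp_all add: GDb_def vb_def Db_def)
    ultimately show ?thesis by simp
  qed
qed

lemma diag_rel: "1 \<le> i \<Longrightarrow> i \<le> 2*n-1 \<Longrightarrow> ACb i i - CAb i i = GDb k i i + GDb Kp i i"
proof -
  assume i: "1 \<le> i" "i \<le> 2*n-1"
  have Y: "Yz i \<in> carrier_mat (v i) (v i)" and X: "Xz i \<in> carrier_mat (v i) (v i)"
    and G: "\<Gamma> i * \<Delta> i \<in> carrier_mat (v i) (v i)" using Yz_c[OF i] Xz_c[OF i] GD_c[OF i] by auto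
  have "sg i \<cdot>\<^sub>m Yz i - sg (i-1) \<cdot>\<^sub>m Xz i = \<Gamma> i * \<Delta> i"
  proof (cases "i < n")
    case True
    then have "sg i = 1" "sg (i-1) = 1" by (auto simp: sg_def)
    then show ?thesis using rel_lt[of i] i True Y X by simp
  next
    case False
    show ?thesis
    proof (cases "i = n")
      case True
      then have s: "sg i = -1" "sg (i-1) = 1" using n2 by (auto simp: sg_def)
      have "sg i \<cdot>\<^sub>m Yz i - sg (i-1) \<cdot>\<^sub>m Xz i = - Xz n - Yz n"
        using s Y X True by (intro eq_matI) auto
      then show ?thesis using rel_eq True by simp
    next
      case False
      then have s: "sg i = -1" "sg (i-1) = -1" using \<open>\<not> i < n\<close> by (auto simp: sg_def)
      have "sg i \<cdot>\<^sub>m Yz i - sg (i-1) \<cdot>\<^sub>m Xz i = Xz i - Yz i"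
        using s Y X by (intro eq_matI) auto
      then show ?thesis using rel_gt[of i] False \<open>\<not> i < n\<close> i by simp
    qed
  qed
  then show ?thesis using ACb_diag[OF i] CAb_diag[OF i] GDb_diag_sum[OF i] by simp
qed


lemma ACb_c: "ACb i l \<in> carrier_mat (vv i) (vv l)"
  unfolding ACb_def using mult_carrier_mat[OF Ab_c Cb_c] by simp
lemma CAb_c: "CAb i l \<in> carrier_mat (vv i) (vv l)"
  unfolding CAb_def using mult_carrier_mat[OF Cb_c Ab_c] by simp
lemma GDb_c: "b \<in> {k, Kp} \<Longrightarrow> GDb b i l \<in> carrier_mat (vv i) (vv l)"
  unfolding GDb_def using mult_carrier_mat[OF vb_c[OF Gc] Db_c] by simp

lemma ACb_off: "i \<noteq> l \<Longrightarrow> ACb i l = 0\<^sub>m (vv i) (vv l)"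
  by (simp add: ACb_def Cb_def)
lemma CAb_off: "i \<noteq> l \<Longrightarrow> CAb i l = 0\<^sub>m (vv i) (vv l)"
proof (cases "i = 0")
  case True
  assume "i \<noteq> l"
  then show ?thesis using True n0 by (simp add: CAb_def Cb_def)
next
  case False
  assume "i \<noteq> l"
  then have "Ab (i-1) l = 0\<^sub>m (vv (i-1)) (vv l)" using False by (simp add: Ab_def)
  then show ?thesis by (simp add: CAb_def)
qed
lemma GDb_off: "b \<in> {k, Kp} \<Longrightarrow> i \<noteq> l \<Longrightarrow> GDb b i l = 0\<^sub>m (vv i) (vv l)"
proof -
  assume b: "b \<in> {k, Kp}" and il: "i \<noteq> l"
  have G: "\<Gamma> b \<in> carrier_mat (vv b) 1" using Gc[OF b] .
  show ?thesis
  proof (cases "i = b")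
    case True
    then have "Db b 0 l = 0\<^sub>m 1 (vv l)" using il by (simp add: Db_def)
    then show ?thesis using True G n0 by (simp add: GDb_def vb_def)
  next
    case False
    then show ?thesis using n0 carrier_matD[OF Db_c[OF b, of 0 l]] by (simp add: GDb_def vb_def)
  qed
qed

lemma comm: "Am * Cm - Cm * Am = gam k * del k + gam Kp * del Kp"
proof -
  have AC: "Am * Cm = bm ACb"
    unfolding Am_def Cm_def ACb_def[abs_def]
    apply (rule bm_mult[where \<phi>=Suc])
      apply simp
     apply simp
    apply (auto simp: Ab_def)
    done
  have CA: "Cm * Am = bm CAb"
    unfolding Am_def Cm_def CAb_def[abs_def]
    apply (rule bm_mult[where \<phi>="\<lambda>i. i - 1"])
      apply simp
     apply simp
    apply (auto simp: Cb_def)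
    done
  have GD: "gam b * del b = bm (GDb b)" if b: "b \<in> {k, Kp}" for b
    unfolding gam_def vecm_def del_def GDb_def[abs_def]
    apply (rule bm_mult[where \<phi>="\<lambda>i. 0"])
      apply (rule vb_c[OF Gc[OF b]])
     apply (rule Db_c[OF b])
    apply (auto simp: vb_def)
    done
  have L: "Am * Cm - Cm * Am = bm (\<lambda>i l. ACb i l - CAb i l)"
    unfolding AC CA by (rule bm_minus) (auto intro: ACb_c CAb_c)
  have R: "gam k * del k + gam Kp * del Kp = bm (\<lambda>i l. GDb k i l + GDb Kp i l)"
    unfolding GD[of k, simplified] GD[of Kp, simplified] by (rule bm_add) (auto intro: GDb_c)
  have "bm (\<lambda>i l. ACb i l - CAb i l) = bm (\<lambda>i l. GDb k i l + GDb Kp i l)"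
  proof (rule bm_cong)
    fix i l assume i: "i < 2*n" and l: "l < 2*n"
    show "ACb i l - CAb i l = GDb k i l + GDb Kp i l"
    proof (cases "i = l")
      case True
      show ?thesis
      proof (cases "i = 0")
        case False
        then show ?thesis using diag_rel[of i] True i by auto
      next
        case True
        have "ACb 0 0 = 0\<^sub>m 1 1" by (simp add: ACb_def Ab_def)
        moreover have "CAb 0 0 = 0\<^sub>m 1 1" using n0 by (simp add: CAb_def Cb_def)
        moreover have "GDb b 0 0 = 0\<^sub>m 1 1" if b: "b \<in> {k, Kp}" for b
        proof -
          have "b \<noteq> 0" using ab_facts[OF b] by auto
          then show ?thesis using carrier_matD[OF Db_c[OF b, of 0 0]] n0 by (simp add: GDb_def vb_def)
        qed
        ultimately show ?thesis using True \<open>i = l\<close> by (auto intro!: eq_matI)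
      qed
    next
      case False
      then show ?thesis using ACb_off CAb_off GDb_off[of k] GDb_off[of Kp] by (auto intro!: eq_matI)
    qed
  qed
  then show ?thesis using L R by simp
qed


lemma vecm_col0: "y < NN \<Longrightarrow> x < NN \<Longrightarrow> x \<noteq> 0 \<Longrightarrow> vecm b X $$ (y, x) = 0"
proof -
  assume y: "y < NN" and x: "x < NN" and x0: "x \<noteq> 0"
  show ?thesis
  proof (cases "x div MM = 0")
    case True
    then have "x mod MM = x" by (metis div_mult_mod_eq mult_zero_left add_0)
    then have "\<not> x mod MM < vv (x div MM)" using True x0 by simp
    then show ?thesis using x y by (simp add: vecm_def bm_index)
  next
    case False
    then show ?thesis using x y by (simp add: vecm_def bm_index vb_def)
  qed
qed

lemma U_row: "W \<in> carrier_mat NN NN \<Longrightarrow> x < NN \<Longrightarrow> x \<noteq> 0 \<Longrightarrow> (W * gam c) $$ (0, x) = 0"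
  using NN_pos by (simp add: scalar_prod_def gam_def vecm_col0)

lemma sc_prod:
  assumes T: "T \<in> carrier_mat NN NN" and S: "S \<in> carrier_mat NN NN"
  shows "sc a b (T * (gam c * del c) * S) = sc a c T * sc c b S"
proof -
  define U where "U = del a * T * gam c"
  define V where "V = del c * S * gam b"
  have U: "U \<in> carrier_mat NN NN" and V: "V \<in> carrier_mat NN NN" using T S by (auto simp: U_def V_def)
  have "del a * (T * (gam c * del c) * S) * gam b = U * V"
    using T S by (simp add: U_def V_def sq_assoc[of _ NN])
  then have "sc a b (T * (gam c * del c) * S) = (U * V) $$ (0,0)" by (simp add: sc_def)
  also have "\<dots> = (\<Sum>x\<in>{0..<NN}. U $$ (0,x) * V $$ (x,0))"
    using U V NN_pos by (simp add: scalar_prod_def)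
  also have "\<dots> = U $$ (0,0) * V $$ (0,0)"
  proof -
    have "(\<Sum>x\<in>{0..<NN}. U $$ (0,x) * V $$ (x,0)) = (\<Sum>x\<in>{0}. U $$ (0,x) * V $$ (x,0))"
    proof (rule sum.mono_neutral_right)
      show "\<forall>x\<in>{0..<NN} - {0}. U $$ (0,x) * V $$ (x,0) = 0"
      proof
        fix x assume "x \<in> {0..<NN} - {0}"
        then have "x < NN" "x \<noteq> 0" by auto
        then have "U $$ (0,x) = 0" unfolding U_def using U_row[of "del a * T" x c] T by simp
        then show "U $$ (0,x) * V $$ (x,0) = 0" by simp
      qed
    qed (use NN_pos in auto)
    then show ?thesis by simp
  qed
  finally show ?thesis by (simp add: sc_def U_def V_def)
qed

lemma sc_add: "Z1 \<in> carrier_mat NN NN \<Longrightarrow> Z2 \<in> carrier_mat NN NN \<Longrightarrow> sc a b (Z1 + Z2) = sc a b Z1 + sc a b Z2"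
  using NN_pos by (simp add: sc_def sq_madd[of _ NN] sq_addm[of _ NN])

lemma sc_minus: "Z1 \<in> carrier_mat NN NN \<Longrightarrow> Z2 \<in> carrier_mat NN NN \<Longrightarrow> sc a b (Z1 - Z2) = sc a b Z1 - sc a b Z2"
  using NN_pos by (simp add: sc_def sq_mminus[of _ NN] sq_minusm[of _ NN])

lemma sc_smult: "Z \<in> carrier_mat NN NN \<Longrightarrow> sc a b (c \<cdot>\<^sub>m Z) = c * sc a b Z"
proof -
  assume Z: "Z \<in> carrier_mat NN NN"
  have "del a * (c \<cdot>\<^sub>m Z) * gam b = c \<cdot>\<^sub>m (del a * Z * gam b)"
    using Z by (simp add: mult_smult_distrib[of _ NN NN _ NN] mult_smult_assoc_mat[of _ NN NN _ NN])
  then show ?thesis using NN_pos by (simp add: sc_def)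
qed

lemma sc_zero: "sc a b (0\<^sub>m NN NN) = 0"
  using NN_pos by (simp add: sc_def)

lemma sc_msum: "(\<And>i. f i \<in> carrier_mat NN NN) \<Longrightarrow> sc a b (msum NN f m) = (\<Sum>i<m. sc a b (f i))"
proof (induction m)
  case 0 then show ?case by (simp add: sc_zero)
next
  case (Suc m)
  have "msum NN f m \<in> carrier_mat NN NN" "f m \<in> carrier_mat NN NN" using Suc.prems by auto
  then show ?case using Suc by (simp add: sc_add)
qed

definition "GP a b = (\<Sum>q<NN. \<Sum>p<NN. monom (gs a b p q) (p+q))"
definition "HP a b = (\<Sum>p<NN. \<Sum>q<NN. monom (hs a b p q) (p+q))"

lemma key_t:
  fixes t :: complex
  assumes a: "a \<in> {k, Kp}" and b: "b \<in> {k, Kp}"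
  shows "poly (GP a b) t - poly (HP a b) t = -(t^2) * (poly (GP a k) t * poly (HP k b) t + poly (GP a Kp) t * poly (HP Kp b) t)"
proof -
  define Zc where "Zc = t \<cdot>\<^sub>m Cm"
  define Za where "Za = t \<cdot>\<^sub>m Am"
  have Zc: "Zc \<in> carrier_mat NN NN" and Za: "Za \<in> carrier_mat NN NN" by (auto simp: Zc_def Za_def)
  define Xi where "Xi = msum NN (\<lambda>p. Zc ^\<^sub>m p) NN"
  define Yi where "Yi = msum NN (\<lambda>q. Za ^\<^sub>m q) NN"
  have Xi: "Xi \<in> carrier_mat NN NN" and Yi: "Yi \<in> carrier_mat NN NN" using Zc Za by (auto simp: Xi_def Yi_def)
  have ZcN: "Zc ^\<^sub>m NN = 0\<^sub>m NN NN" unfolding Zc_def using smult_pow_mat[OF Cm_c] Cm_nil by simp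
  have ZaN: "Za ^\<^sub>m NN = 0\<^sub>m NN NN" unfolding Za_def using smult_pow_mat[OF Am_c] Am_nil by simp
  have one0: "1\<^sub>m NN - 0\<^sub>m NN NN = (1\<^sub>m NN :: complex mat)" by (intro eq_matI) auto
  have i1: "(1\<^sub>m NN - Zc) * Xi = 1\<^sub>m NN" using geom_left[OF Zc, of NN] ZcN one0 by (simp add: Xi_def)
  have i2: "Xi * (1\<^sub>m NN - Zc) = 1\<^sub>m NN" using geom_right[OF Zc, of NN] ZcN one0 by (simp add: Xi_def)
  have i3: "(1\<^sub>m NN - Za) * Yi = 1\<^sub>m NN" using geom_left[OF Za, of NN] ZaN one0 by (simp add: Yi_def)
  have i4: "Yi * (1\<^sub>m NN - Za) = 1\<^sub>m NN" using geom_right[OF Za, of NN] ZaN one0 by (simp add: Yi_def)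
  define T where "T = Xi * Yi"
  define S where "S = Yi * Xi"
  have T: "T \<in> carrier_mat NN NN" and S: "S \<in> carrier_mat NN NN" using Xi Yi by (auto simp: T_def S_def)
  have TS: "T - S = T * ((1\<^sub>m NN - Zc) * (1\<^sub>m NN - Za) - (1\<^sub>m NN - Za) * (1\<^sub>m NN - Zc)) * S"
    unfolding T_def S_def by (rule inv_comm_identity) (use Zc Za Xi Yi i1 i2 i3 i4 in auto)
  have cz: "(1\<^sub>m NN - Zc) * (1\<^sub>m NN - Za) - (1\<^sub>m NN - Za) * (1\<^sub>m NN - Zc) = Zc * Za - Za * Zc"
    by (rule comm_XY[OF Za Zc])
  have "Zc * Za - Za * Zc = (-(t^2)) \<cdot>\<^sub>m (Am * Cm - Cm * Am)"
    unfolding Zc_def Za_def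
    by (intro eq_matI) (auto simp: mult_smult_distrib[of _ NN NN _ NN] mult_smult_assoc_mat[of _ NN NN _ NN] algebra_simps power2_eq_square)
  then have TS2: "T - S = T * ((-(t^2)) \<cdot>\<^sub>m (gam k * del k + gam Kp * del Kp)) * S"
    using TS cz comm by simp
  have E1: "gam k * del k \<in> carrier_mat NN NN" and E2: "gam Kp * del Kp \<in> carrier_mat NN NN" by auto
  define X1 where "X1 = T * (gam k * del k) * S"
  define X2 where "X2 = T * (gam Kp * del Kp) * S"
  have X1: "X1 \<in> carrier_mat NN NN" and X2: "X2 \<in> carrier_mat NN NN" using T S by (auto simp: X1_def X2_def)
  have ex: "T * ((-(t^2)) \<cdot>\<^sub>m (gam k * del k + gam Kp * del Kp)) * S = (-(t^2)) \<cdot>\<^sub>m (X1 + X2)"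
    unfolding X1_def X2_def using T S E1 E2
    by (simp add: mult_smult_distrib[of _ NN NN _ NN] mult_smult_assoc_mat[of _ NN NN _ NN] sq_madd[of _ NN] sq_addm[of _ NN])
  have p1: "sc a b X1 = sc a k T * sc k b S" unfolding X1_def by (rule sc_prod[OF T S])
  have p2: "sc a b X2 = sc a Kp T * sc Kp b S" unfolding X2_def by (rule sc_prod[OF T S])
  have "sc a b (T - S) = sc a b ((-(t^2)) \<cdot>\<^sub>m (X1 + X2))" unfolding TS2 ex ..
  also have "\<dots> = -(t^2) * (sc a b X1 + sc a b X2)" using X1 X2 by (simp add: sc_smult sc_add)
  finally have "sc a b (T - S) = -(t^2) * (sc a k T * sc k b S + sc a Kp T * sc Kp b S)" using p1 p2 by simp
  then have main: "sc a b T - sc a b S = -(t^2) * (sc a k T * sc k b S + sc a Kp T * sc Kp b S)"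
    using sc_minus[OF T S] by simp
  have Texp: "sc a' b' T = poly (GP a' b') t" for a' b'
  proof -
    have "T = msum NN (\<lambda>q. msum NN (\<lambda>p. Zc ^\<^sub>m p * Za ^\<^sub>m q) NN) NN"
      unfolding T_def Xi_def Yi_def using Zc Za
      by (simp add: mult_msum_right[of _ NN] mult_msum_left[of _ NN])
    then have "sc a' b' T = (\<Sum>q<NN. \<Sum>p<NN. sc a' b' (Zc ^\<^sub>m p * Za ^\<^sub>m q))"
      using Zc Za by (simp add: sc_msum)
    also have "\<dots> = (\<Sum>q<NN. \<Sum>p<NN. gs a' b' p q * t ^ (p+q))"
    proof (intro sum.cong refl)
      fix p q
      have "Zc ^\<^sub>m p * Za ^\<^sub>m q = (t^q * t^p) \<cdot>\<^sub>m (Cm ^\<^sub>m p * Am ^\<^sub>m q)"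
        unfolding Zc_def Za_def using smult_pow_mat[OF Cm_c] smult_pow_mat[OF Am_c]
        by (simp add: mult_smult_distrib[of _ NN NN _ NN] mult_smult_assoc_mat[of _ NN NN _ NN] smult_smult_mat)
      moreover have "Cm ^\<^sub>m p * Am ^\<^sub>m q \<in> carrier_mat NN NN" by simp
      ultimately show "sc a' b' (Zc ^\<^sub>m p * Za ^\<^sub>m q) = gs a' b' p q * t ^ (p+q)"
        using sc_smult by (simp add: gs_def power_add mult_ac)
    qed
    also have "\<dots> = poly (GP a' b') t" by (simp add: GP_def poly_sum poly_monom)
    finally show ?thesis .
  qed
  have Sexp: "sc a' b' S = poly (HP a' b') t" for a' b'
  proof -
    have "S = msum NN (\<lambda>p. msum NN (\<lambda>q. Za ^\<^sub>m q * Zc ^\<^sub>m p) NN) NN"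
      unfolding S_def Xi_def Yi_def using Zc Za
      by (simp add: mult_msum_right[of _ NN] mult_msum_left[of _ NN])
    then have "sc a' b' S = (\<Sum>p<NN. \<Sum>q<NN. sc a' b' (Za ^\<^sub>m q * Zc ^\<^sub>m p))"
      using Zc Za by (simp add: sc_msum)
    also have "\<dots> = (\<Sum>p<NN. \<Sum>q<NN. hs a' b' p q * t ^ (p+q))"
    proof (intro sum.cong refl)
      fix p q
      have "Za ^\<^sub>m q * Zc ^\<^sub>m p = (t^p * t^q) \<cdot>\<^sub>m (Am ^\<^sub>m q * Cm ^\<^sub>m p)"
        unfolding Zc_def Za_def using smult_pow_mat[OF Cm_c] smult_pow_mat[OF Am_c]
        by (simp add: mult_smult_distrib[of _ NN NN _ NN] mult_smult_assoc_mat[of _ NN NN _ NN] smult_smult_mat)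
      moreover have "Am ^\<^sub>m q * Cm ^\<^sub>m p \<in> carrier_mat NN NN" by simp
      ultimately show "sc a' b' (Za ^\<^sub>m q * Zc ^\<^sub>m p) = hs a' b' p q * t ^ (p+q)"
        using sc_smult by (simp add: hs_def power_add mult_ac)
    qed
    also have "\<dots> = poly (HP a' b') t" by (simp add: HP_def poly_sum poly_monom)
    finally show ?thesis .
  qed
  show ?thesis using main by (simp add: Texp Sexp)
qed


lemma kK: "k \<in> {k, Kp}" "Kp \<in> {k, Kp}" by auto

lemma poly_rel: "GP k k = - HP Kp Kp \<and> GP Kp Kp = - HP k k \<and> GP k Kp = HP k Kp \<and> GP Kp k = HP Kp k"
  by (rule two_by_two[OF key_t[OF kK(1) kK(1)] key_t[OF kK(1) kK(2)] key_t[OF kK(2) kK(1)] key_t[OF kK(2) kK(2)]])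

lemma NN_ge: "2*n \<le> NN"
proof -
  have "1 \<le> MM" by (simp add: MM_def)
  then show ?thesis by (simp add: NN_def)
qed

lemma GP_coeff:
  assumes p0: "p0 < NN" and q0: "q0 < NN"
    and u: "\<And>p q. p < NN \<Longrightarrow> q < NN \<Longrightarrow> gs a b p q \<noteq> 0 \<Longrightarrow> p + q = p0 + q0 \<Longrightarrow> p = p0 \<and> q = q0"
  shows "coeff (GP a b) (p0 + q0) = gs a b p0 q0"
proof -
  have "coeff (GP a b) (p0 + q0) = (\<Sum>q<NN. \<Sum>p<NN. if p + q = p0 + q0 then gs a b p q else 0)"
    by (simp add: GP_def coeff_sum)
  also have "\<dots> = (if p0 + q0 = p0 + q0 then gs a b p0 q0 else 0)"
  proof (rule dsum_single[OF q0 p0, where g="\<lambda>q p. if p + q = p0 + q0 then gs a b p q else 0"])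
    fix q p assume q: "q < NN" and p: "p < NN" and ne: "\<not> (q = q0 \<and> p = p0)"
    show "(if p + q = p0 + q0 then gs a b p q else 0) = 0"
    proof (cases "p + q = p0 + q0")
      case True
      have "gs a b p q = 0"
      proof (rule ccontr)
        assume "gs a b p q \<noteq> 0"
        then have "p = p0 \<and> q = q0" using u[OF p q _ True] by blast
        then show False using ne by blast
      qed
      then show ?thesis by simp
    qed simp
  qed
  finally show ?thesis by simp
qed

lemma HP_coeff:
  assumes p0: "p0 < NN" and q0: "q0 < NN"
    and u: "\<And>p q. p < NN \<Longrightarrow> q < NN \<Longrightarrow> hs a b p q \<noteq> 0 \<Longrightarrow> p + q = p0 + q0 \<Longrightarrow> p = p0 \<and> q = q0"
  shows "coeff (HP a b) (p0 + q0) = hs a b p0 q0"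
proof -
  have "coeff (HP a b) (p0 + q0) = (\<Sum>p<NN. \<Sum>q<NN. if p + q = p0 + q0 then hs a b p q else 0)"
    by (simp add: HP_def coeff_sum)
  also have "\<dots> = (if p0 + q0 = p0 + q0 then hs a b p0 q0 else 0)"
  proof (rule dsum_single[OF p0 q0, where g="\<lambda>p q. if p + q = p0 + q0 then hs a b p q else 0"])
    fix p q assume p: "p < NN" and q: "q < NN" and ne: "\<not> (p = p0 \<and> q = q0)"
    show "(if p + q = p0 + q0 then hs a b p q else 0) = 0"
    proof (cases "p + q = p0 + q0")
      case True
      have "hs a b p q = 0"
      proof (rule ccontr)
        assume "hs a b p q \<noteq> 0"
        then have "p = p0 \<and> q = q0" using u[OF p q _ True] by blast
        then show False using ne by blast
      qed
      then show ?thesis by simp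
    qed simp
  qed
  finally show ?thesis by simp
qed

lemma gs_nz:
  assumes a: "a \<in> {k, Kp}" and b: "b \<in> {k, Kp}" and nz: "gs a b p q \<noteq> 0"
  shows "q < b \<and> b - q + p = a"
proof (rule ccontr)
  assume c: "\<not> (q < b \<and> b - q + p = a)"
  have "gs a b p q = 0" using gs_val[OF a b, of p q] c by (simp only: if_False)
  then show False using nz by simp
qed
lemma hs_nz:
  assumes a: "a \<in> {k, Kp}" and b: "b \<in> {k, Kp}" and nz: "hs a b p q \<noteq> 0"
  shows "b + p \<le> 2*n-1 \<and> q < b + p \<and> b + p - q = a"
proof (rule ccontr)
  assume c: "\<not> (b + p \<le> 2*n-1 \<and> q < b + p \<and> b + p - q = a)"
  have "hs a b p q = 0" using hs_val[OF a b, of p q] c by (simp only: if_False)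
  then show False using nz by simp
qed


lemma one_one_eq:
  fixes L R :: "complex mat"
  assumes "L \<in> carrier_mat 1 1" "R \<in> carrier_mat 1 1" "L $$ (0,0) = c * R $$ (0,0)"
  shows "L = c \<cdot>\<^sub>m R"
  using assms by (intro eq_matI) auto

lemma lhs_c:
  assumes a: "a \<in> {k, Kp}" and b: "b \<in> {k, Kp}"
  shows "\<Delta> a * P * \<Gamma> b \<in> carrier_mat 1 1"
proof -
  have "dim_row (\<Delta> a) = 1" using carrier_matD[OF Dc[OF a]] by simp
  moreover have "dim_col (\<Gamma> b) = 1" using carrier_matD[OF Gc[OF b]] by simp
  ultimately show ?thesis by (intro carrier_matI) simp_all
qed

lemma claim1:
  assumes j: "1 \<le> j" "j \<le> k"
  shows "\<Delta> k * path3 B v k (k-j+1) k * \<Gamma> k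
     = (-1)^j \<cdot>\<^sub>m (\<Delta> (2*n-k) * path3 B v (2*n-k) (2*n-k+j-1) (2*n-k) * \<Gamma> (2*n-k))"
proof -
  define m where "m = j - 1"
  have mk: "m < k" "j = Suc m" "k - j + 1 = k - m" "Kp+j-1 = Kp + m" "2*n-k = Kp"
    using j by (auto simp: m_def Kp_def)
  have mN: "m < NN" using mk NN_ge kn by linarith
  define L where "L = (\<Delta> k * path3 B v k (k-m) k * \<Gamma> k) $$ (0,0)"
  define R where "R = (\<Delta> Kp * path3 B v Kp (Kp+m) Kp * \<Gamma> Kp) $$ (0,0)"
  have g: "gs k k m m = L" using gs_val[OF kK(1) kK(1), of m m] mk kn by (simp add: fl_def L_def)
  have h: "hs Kp Kp m m = (-1)^m * R" using hs_val[OF kK(2) kK(2), of m m] mk Kp_facts by (simp add: fl_def R_def)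
  have cg: "coeff (GP k k) (m+m) = gs k k m m"
  proof (rule GP_coeff[OF mN mN])
    fix p q assume "p < NN" "q < NN" and nz: "gs k k p q \<noteq> 0" and sm: "p + q = m + m"
    from gs_nz[OF kK(1) kK(1) nz] have "q < k" "k - q + p = k" by auto
    then show "p = m \<and> q = m" using sm by arith
  qed
  have ch: "coeff (HP Kp Kp) (m+m) = hs Kp Kp m m"
  proof (rule HP_coeff[OF mN mN])
    fix p q assume "p < NN" "q < NN" and nz: "hs Kp Kp p q \<noteq> 0" and sm: "p + q = m + m"
    from hs_nz[OF kK(2) kK(2) nz] have "q < Kp + p" "Kp + p - q = Kp" by auto
    then show "p = m \<and> q = m" using sm by arith
  qed
  have "coeff (GP k k) (m+m) = - coeff (HP Kp Kp) (m+m)" using poly_rel by simp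
  then have "gs k k m m = - hs Kp Kp m m" using cg ch by simp
  then have LR: "L = (-1)^j * R" using g h mk by simp
  show ?thesis unfolding mk(5) mk(3,4)
    by (rule one_one_eq[OF lhs_c[OF kK(1) kK(1)] lhs_c[OF kK(2) kK(2)]]) (use LR in \<open>simp add: L_def R_def\<close>)
qed

lemma claim4:
  assumes j: "1 \<le> j" "j \<le> 2*n-k"
  shows "\<Delta> (2*n-k) * path3 B v (2*n-k) (2*n-k-j+1) (2*n-k) * \<Gamma> (2*n-k)
     = (-1)^j \<cdot>\<^sub>m (\<Delta> k * path3 B v k (k+j-1) k * \<Gamma> k)"
proof -
  define m where "m = j - 1"
  have mk: "m < Kp" "j = Suc m" "Kp-j+1 = Kp - m" "k+j-1 = k + m" "2*n-k = Kp"
    using j by (auto simp: m_def Kp_def)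
  have mN: "m < NN" using mk NN_ge Kp_facts by linarith
  define L where "L = (\<Delta> Kp * path3 B v Kp (Kp-m) Kp * \<Gamma> Kp) $$ (0,0)"
  define R where "R = (\<Delta> k * path3 B v k (k+m) k * \<Gamma> k) $$ (0,0)"
  have f1: "fl (Kp - m) m = min m (n-k)"
  proof (cases "m \<le> n - k")
    case True
    then have "max (Kp - m) n = Kp - m" "Kp - m + m = Kp" using mk Kp_facts kn unfolding Kp_def by auto
    then show ?thesis using True by (simp add: fl_def min_def)
  next
    case False
    then have "max (Kp - m) n = n" "Kp - m + m = Kp" "Kp - n = n - k" using mk Kp_facts kn unfolding Kp_def by auto
    then show ?thesis using False by (simp add: fl_def min_def)
  qed
  have f2: "fl k m = k + m - n" using kn unfolding fl_def by (simp add: max_def)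
  have g: "gs Kp Kp m m = (-1)^(min m (n-k)) * L" using gs_val[OF kK(2) kK(2), of m m] mk f1 by (simp add: L_def)
  have hk: "k + m \<le> 2*n-1" using mk Kp_facts unfolding Kp_def by linarith
  have h: "hs k k m m = (-1)^(k+m-n) * R" using hs_val[OF kK(1) kK(1), of m m] hk f2 k1 by (simp add: R_def)
  have cg: "coeff (GP Kp Kp) (m+m) = gs Kp Kp m m"
  proof (rule GP_coeff[OF mN mN])
    fix p q assume "p < NN" "q < NN" and nz: "gs Kp Kp p q \<noteq> 0" and sm: "p + q = m + m"
    from gs_nz[OF kK(2) kK(2) nz] have "q < Kp" "Kp - q + p = Kp" by auto
    then show "p = m \<and> q = m" using sm by arith
  qed
  have ch: "coeff (HP k k) (m+m) = hs k k m m"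
  proof (rule HP_coeff[OF mN mN])
    fix p q assume "p < NN" "q < NN" and nz: "hs k k p q \<noteq> 0" and sm: "p + q = m + m"
    from hs_nz[OF kK(1) kK(1) nz] have "q < k + p" "k + p - q = k" by auto
    then show "p = m \<and> q = m" using sm by arith
  qed
  have "coeff (GP Kp Kp) (m+m) = - coeff (HP k k) (m+m)" using poly_rel by simp
  then have "gs Kp Kp m m = - hs k k m m" using cg ch by simp
  then have e: "(-1)^(min m (n-k)) * L = - ((-1)^(k+m-n) * R)" using g h by simp
  have ex: "min m (n-k) + (k+m-n) = m" using kn unfolding min_def by (cases "m \<le> n - k") arith+
  have "(-1)^(min m (n-k)) * ((-1)^(min m (n-k)) * L) = (-1)^(min m (n-k)) * (- ((-1)^(k+m-n) * R))"
    using e by simp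
  then have "L = - ((-1)^(min m (n-k) + (k+m-n)) * R)"
    by (simp add: power_add mult.assoc[symmetric] power_mult_distrib[symmetric])
  then have LR: "L = (-1)^j * R" using ex mk by simp
  show ?thesis unfolding mk(5) mk(3,4)
    by (rule one_one_eq[OF lhs_c[OF kK(2) kK(2)] lhs_c[OF kK(1) kK(1)]]) (use LR in \<open>simp add: L_def R_def\<close>)
qed


lemma claim2:
  assumes j: "1 \<le> j" "j \<le> k"
  shows "\<Delta> k * path3 B v k (k-j+1) (2*n-k) * \<Gamma> (2*n-k)
     = (-1)^(j-1) \<cdot>\<^sub>m (\<Delta> k * path3 B v k (2*n-k+j-1) (2*n-k) * \<Gamma> (2*n-k))"
proof -
  define m where "m = j - 1"
  define q0 where "q0 = m + (Kp - k)"
  have mk: "m < k" "j - 1 = m" "k - j + 1 = k - m" "Kp+j-1 = Kp + m" "2*n-k = Kp"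
    using j by (auto simp: m_def Kp_def)
  have KK: "k < Kp" "Kp + k = 2*n" "Kp \<le> 2*n-1" using Kp_facts kn unfolding Kp_def by auto
  have q0f: "q0 < Kp" "Kp - q0 = k - m" "Kp + m - q0 = k" "q0 < Kp + m" using mk KK unfolding q0_def by auto
  have mN: "m < NN" and qN: "q0 < NN" using mk KK NN_ge q0f by linarith+
  define L where "L = (\<Delta> k * path3 B v k (k-m) Kp * \<Gamma> Kp) $$ (0,0)"
  define R where "R = (\<Delta> k * path3 B v k (Kp+m) Kp * \<Gamma> Kp) $$ (0,0)"
  have fl0: "fl (k-m) m = 0" using mk kn by (simp add: fl_def)
  have flm: "fl Kp m = m" using KK kn Kp_facts by (simp add: fl_def max_def)
  have g: "gs k Kp m q0 = L"
    using gs_val[OF kK(1) kK(2), of m q0] q0f mk fl0 by (simp add: L_def)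
  have hc: "Kp + m \<le> 2*n-1" using mk KK by linarith
  have h: "hs k Kp m q0 = (-1)^m * R"
    using hs_val[OF kK(1) kK(2), of m q0] q0f hc flm by (simp add: R_def)
  have cg: "coeff (GP k Kp) (m+q0) = gs k Kp m q0"
  proof (rule GP_coeff[OF mN qN])
    fix p q assume "p < NN" "q < NN" and nz: "gs k Kp p q \<noteq> 0" and sm: "p + q = m + q0"
    from gs_nz[OF kK(1) kK(2) nz] have "q < Kp" "Kp - q + p = k" by auto
    then show "p = m \<and> q = q0" using sm KK unfolding q0_def by arith
  qed
  have ch: "coeff (HP k Kp) (m+q0) = hs k Kp m q0"
  proof (rule HP_coeff[OF mN qN])
    fix p q assume "p < NN" "q < NN" and nz: "hs k Kp p q \<noteq> 0" and sm: "p + q = m + q0"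
    from hs_nz[OF kK(1) kK(2) nz] have "q < Kp + p" "Kp + p - q = k" by auto
    then show "p = m \<and> q = q0" using sm KK unfolding q0_def by arith
  qed
  have "coeff (GP k Kp) (m+q0) = coeff (HP k Kp) (m+q0)" using poly_rel by simp
  then have LR: "L = (-1)^m * R" using cg ch g h by simp
  show ?thesis unfolding mk(5) mk(2,3,4)
    by (rule one_one_eq[OF lhs_c[OF kK(1) kK(2)] lhs_c[OF kK(1) kK(2)]]) (use LR in \<open>simp add: L_def R_def\<close>)
qed

lemma claim3:
  assumes j: "1 \<le> j" "j \<le> k"
  shows "\<Delta> (2*n-k) * path3 B v (2*n-k) (k-j+1) k * \<Gamma> k
     = (-1)^(j-1) \<cdot>\<^sub>m (\<Delta> (2*n-k) * path3 B v (2*n-k) (2*n-k+j-1) k * \<Gamma> k)"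
proof -
  define m where "m = j - 1"
  define p0 where "p0 = m + (Kp - k)"
  have mk: "m < k" "j - 1 = m" "k - j + 1 = k - m" "Kp+j-1 = Kp + m" "2*n-k = Kp"
    using j by (auto simp: m_def Kp_def)
  have KK: "k < Kp" "Kp + k = 2*n" "Kp \<le> 2*n-1" "n < Kp" using Kp_facts kn unfolding Kp_def by auto
  have p0f: "k - m + p0 = Kp" "k + p0 = Kp + m" "k + p0 - m = Kp" "m < k + p0" using mk KK unfolding p0_def by auto
  have mN: "m < NN" and pN: "p0 < NN" using mk KK NN_ge unfolding p0_def by linarith+
  define L where "L = (\<Delta> Kp * path3 B v Kp (k-m) k * \<Gamma> k) $$ (0,0)"
  define R where "R = (\<Delta> Kp * path3 B v Kp (Kp+m) k * \<Gamma> k) $$ (0,0)"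
  have f1: "fl (k-m) p0 = Kp - n" using p0f mk KK kn by (simp add: fl_def max_def)
  have f2: "fl k p0 = (Kp - n) + m" using p0f KK kn by (simp add: fl_def max_def)
  have g: "gs Kp k p0 m = (-1)^(Kp-n) * L"
    using gs_val[OF kK(2) kK(1), of p0 m] p0f mk f1 by (simp add: L_def)
  have hc: "k + p0 \<le> 2*n-1" using mk KK p0f by linarith
  have h: "hs Kp k p0 m = (-1)^(Kp-n) * (-1)^m * R"
    using hs_val[OF kK(2) kK(1), of p0 m] p0f hc f2 by (simp add: R_def power_add)
  have cg: "coeff (GP Kp k) (p0+m) = gs Kp k p0 m"
  proof (rule GP_coeff[OF pN mN])
    fix p q assume "p < NN" "q < NN" and nz: "gs Kp k p q \<noteq> 0" and sm: "p + q = p0 + m"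
    from gs_nz[OF kK(2) kK(1) nz] have "q < k" "k - q + p = Kp" by auto
    then show "p = p0 \<and> q = m" using sm KK unfolding p0_def by arith
  qed
  have ch: "coeff (HP Kp k) (p0+m) = hs Kp k p0 m"
  proof (rule HP_coeff[OF pN mN])
    fix p q assume "p < NN" "q < NN" and nz: "hs Kp k p q \<noteq> 0" and sm: "p + q = p0 + m"
    from hs_nz[OF kK(2) kK(1) nz] have "q < k + p" "k + p - q = Kp" by auto
    then show "p = p0 \<and> q = m" using sm KK unfolding p0_def by arith
  qed
  have "coeff (GP Kp k) (p0+m) = coeff (HP Kp k) (p0+m)" using poly_rel by simp
  then have e: "(-1)^(Kp-n) * L = (-1)^(Kp-n) * ((-1)^m * R)" using cg ch g h by (simp add: mult.assoc)
  have nz: "((-1::complex)^(Kp-n)) \<noteq> 0" by simp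
  have LR: "L = (-1)^m * R" using e nz by (metis mult_left_cancel)
  show ?thesis unfolding mk(5) mk(2,3,4) p0f(2)
    by (rule one_one_eq[OF lhs_c[OF kK(2) kK(1)] lhs_c[OF kK(2) kK(1)]]) (use LR in \<open>simp add: L_def R_def\<close>)
qed

lemma final:
  "(\<forall>j. 1 \<le> j \<and> j \<le> k \<longrightarrow>
            \<Delta> k * path3 B v k (k-j+1) k * \<Gamma> k
              = (-1)^j \<cdot>\<^sub>m (\<Delta> (2*n-k) * path3 B v (2*n-k) (2*n-k+j-1) (2*n-k) * \<Gamma> (2*n-k))
          \<and> \<Delta> k * path3 B v k (k-j+1) (2*n-k) * \<Gamma> (2*n-k)
              = (-1)^(j-1) \<cdot>\<^sub>m (\<Delta> k * path3 B v k (2*n-k+j-1) (2*n-k) * \<Gamma> (2*n-k))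
          \<and> \<Delta> (2*n-k) * path3 B v (2*n-k) (k-j+1) k * \<Gamma> k
              = (-1)^(j-1) \<cdot>\<^sub>m (\<Delta> (2*n-k) * path3 B v (2*n-k) (2*n-k+j-1) k * \<Gamma> k))
       \<and> (\<forall>j. 1 \<le> j \<and> j \<le> 2*n-k \<longrightarrow>
            \<Delta> (2*n-k) * path3 B v (2*n-k) (2*n-k-j+1) (2*n-k) * \<Gamma> (2*n-k)
              = (-1)^j \<cdot>\<^sub>m (\<Delta> k * path3 B v k (k+j-1) k * \<Gamma> k))"
  using claim1 claim2 claim3 claim4 by blast

end


theorem lemma4p14:
  fixes n k :: nat and v :: "nat \<Rightarrow> nat"
    and B :: "nat \<Rightarrow> nat \<Rightarrow> complex mat" and \<Gamma> \<Delta> :: "nat \<Rightarrow> complex mat"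
  assumes "1 \<le> k" and "k < n"
    and "\<forall>i. 1 \<le> i \<and> i \<le> 2*n-1 \<longrightarrow> v i = v (2*n-i)"
    and "nonempty_cond n k v"
    and "Lambda_A n v (\<lambda>i. if i = k \<or> i = 2*n-k then 1 else 0) B \<Gamma> \<Delta>"
  shows "(\<forall>j. 1 \<le> j \<and> j \<le> k \<longrightarrow>
            \<Delta> k * path3 B v k (k-j+1) k * \<Gamma> k
              = (-1)^j \<cdot>\<^sub>m (\<Delta> (2*n-k) * path3 B v (2*n-k) (2*n-k+j-1) (2*n-k) * \<Gamma> (2*n-k))
          \<and> \<Delta> k * path3 B v k (k-j+1) (2*n-k) * \<Gamma> (2*n-k)
              = (-1)^(j-1) \<cdot>\<^sub>m (\<Delta> k * path3 B v k (2*n-k+j-1) (2*n-k) * \<Gamma> (2*n-k))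
          \<and> \<Delta> (2*n-k) * path3 B v (2*n-k) (k-j+1) k * \<Gamma> k
              = (-1)^(j-1) \<cdot>\<^sub>m (\<Delta> (2*n-k) * path3 B v (2*n-k) (2*n-k+j-1) k * \<Gamma> k))
       \<and> (\<forall>j. 1 \<le> j \<and> j \<le> 2*n-k \<longrightarrow>
            \<Delta> (2*n-k) * path3 B v (2*n-k) (2*n-k-j+1) (2*n-k) * \<Gamma> (2*n-k)
              = (-1)^j \<cdot>\<^sub>m (\<Delta> k * path3 B v k (k+j-1) k * \<Gamma> k))"
proof -
  interpret setting n k v B \<Gamma> \<Delta> using assms(1,2,5) by unfold_locales auto
  show ?thesis by (rule final)
qed

end
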